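(* Let $\alpha\in(0,1)$ and $\nu\in\mathcal M^+_\alpha(\mathbb R)$. Then there exists $\mu\in\mathcal M^+_1(\mathbb R)$ such that $$C_\alpha[\nu](z)=C_1[\mu](z),\qquad z\in\mathbb C^+,$$ if and only if $$\int_{(-\infty,0]}\frac{\log(|t|+1)\,\nu(dt)}{(1+|t|)^\alpha}<\infty.$$
   Context: $\mathbb C^+=\{z:\operatorname{Im}z>0\}$. For $\alpha\ge0$, $\mathcal M^+_\alpha(\mathbb R)$ is the set of positive Borel (Radon) measures $\mu$ on $\mathbb R$ with $\int_{\mathbb R}(1+|t|)^{-\alpha}\mu(dt)<\infty$. For $\alpha>0$, $C_\alpha[\mu](z)=\int_{\mathbb R}\frac{\mu(dt)}{(z+t)^\alpha}$, $z\in\mathbb C^+$, with the principal branch of the power. *)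

theory Defs
  imports "HOL-Analysis.Analysis"
begin

text \<open>The class M^+_alpha(R): positive Borel measures mu on R with
  integral of (1+|t|)^(-alpha) finite (this also makes mu locally finite, i.e. Radon).\<close>
definition Mplus :: "real \<Rightarrow> real measure set" where
  "Mplus \<alpha> = {\<mu>. sets \<mu> = sets borel \<and>
      (\<integral>\<^sup>+ t. ennreal ((1 + \<bar>t\<bar>) powr (-\<alpha>)) \<partial>\<mu>) < \<infinity>}"

definition Cauchy_tr :: "real \<Rightarrow> real measure \<Rightarrow> complex \<Rightarrow> complex" where
  "Cauchy_tr \<alpha> \<mu> z = (\<integral> t. inverse ((z + complex_of_real t) powr complex_of_real \<alpha>) \<partial>\<mu>)"

end

theory Submission
  imports Defs "HOL-Complex_Analysis.Complex_Analysis"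
begin

lemma Mplus_sigma_finite:
  assumes M: "M \<in> Mplus a" and a: "0 \<le> a"
  shows "sigma_finite_measure M"
proof -
  have sM: "sets M = sets borel" and fin: "(\<integral>\<^sup>+ t. ennreal ((1 + \<bar>t\<bar>) powr (-a)) \<partial>M) < \<infinity>"
    using M by (auto simp: Mplus_def)
  have sp: "space M = UNIV" using sets_eq_imp_space_eq[OF sM] by simp
  show ?thesis unfolding sigma_finite_measure_def
  proof (intro exI[of _ "range (\<lambda>n::nat. {-real n..real n})"] conjI ballI)
    show "countable (range (\<lambda>n::nat. {-real n..real n}))" by (rule countable_image) simp
    show "range (\<lambda>n::nat. {-real n..real n}) \<subseteq> sets M" unfolding sM by (simp add: image_subset_iff)
    show "\<Union> (range (\<lambda>n::nat. {-real n..real n})) = space M"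
      unfolding sp
    proof (intro set_eqI iffI)
      fix x :: real
      obtain n :: nat where "\<bar>x\<bar> \<le> real n" using real_arch_simple by blast
      then show "x \<in> \<Union> (range (\<lambda>n::nat. {-real n..real n}))" by (intro UN_I[of n]) auto
    qed simp
    fix A assume "A \<in> range (\<lambda>n::nat. {-real n..real n})"
    then obtain n :: nat where A: "A = {-real n..real n}" by auto
    have pos: "0 < (1 + real n) powr (-a)" by simp
    have "ennreal ((1 + real n) powr (-a)) * emeasure M A = (\<integral>\<^sup>+ t. ennreal ((1 + real n) powr (-a)) * indicator A t \<partial>M)"
      using sM A by (simp add: nn_integral_cmult_indicator)
    also have "\<dots> \<le> (\<integral>\<^sup>+ t. ennreal ((1 + \<bar>t\<bar>) powr (-a)) \<partial>M)"
    proof (intro nn_integral_mono)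
      fix t show "ennreal ((1 + real n) powr (-a)) * indicator A t \<le> ennreal ((1 + \<bar>t\<bar>) powr (-a))"
      proof (cases "t \<in> A")
        case True
        then have "\<bar>t\<bar> \<le> real n" using A by auto
        then have "(1 + real n) powr (-a) \<le> (1 + \<bar>t\<bar>) powr (-a)"
          using a by (intro powr_mono2') auto
        then show ?thesis using True by simp
      qed simp
    qed
    finally have "ennreal ((1 + real n) powr (-a)) * emeasure M A < \<infinity>" using fin by simp
    then show "emeasure M A \<noteq> \<infinity>" using pos by (auto simp: ennreal_mult_less_top)
  qed
qed

lemma one_plus_powr_pos [simp]: "0 < 1 + (x::real) powr p"
  by (metis add_pos_nonneg powr_ge_zero zero_less_one)

lemma nn_tail:
  fixes p a :: real assumes p: "1 < p" and a: "0 < a"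
  shows "(\<integral>\<^sup>+x. ennreal (x powr (-p)) * indicator {a..} x \<partial>lborel) = ennreal (a powr (1-p) / (p-1))"
proof -
  have "(\<integral>\<^sup>+x. ennreal (x powr (-p)) * indicator {a..} x \<partial>lborel) = 0 - a powr (1-p) / (1-p)"
  proof (rule nn_integral_FTC_atLeast)
    show "(\<lambda>x::real. x powr (-p)) \<in> borel_measurable borel" by measurable
    fix x :: real assume "a \<le> x"
    then have x: "0 < x" using a by simp
    show "((\<lambda>x. x powr (1-p) / (1-p)) has_real_derivative x powr (-p)) (at x)"
    proof -
      have "((\<lambda>z. z powr (1-p)) has_real_derivative (1-p) * x powr (1-p-1)) (at x)"
        by (rule has_real_derivative_powr[OF x])
      then have "((\<lambda>z. z powr (1-p) / (1-p)) has_real_derivative (1-p) * x powr (1-p-1) / (1-p)) (at x)"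
        by (rule DERIV_cdivide)
      moreover have "(1-p) * x powr (1-p-1) / (1-p) = x powr (-p)" using p by simp
      ultimately show ?thesis by simp
    qed
    show "0 \<le> x powr (-p)" by simp
  next
    have "((\<lambda>x::real. x powr (1-p)) \<longlongrightarrow> 0) at_top"
      using p by (intro tendsto_neg_powr filterlim_ident) auto
    then show "((\<lambda>x::real. x powr (1-p) / (1-p)) \<longlongrightarrow> 0) at_top"
      using tendsto_divide_zero by blast
  qed
  also have "0 - a powr (1-p) / (1-p) = a powr (1-p) / (p-1)"
    using p by (simp add: field_simps)
  finally show ?thesis .
qed

definition Kn :: "real \<Rightarrow> ennreal" where
  "Kn p = (\<integral>\<^sup>+x. ennreal (1/(1 + x powr p)) * indicator {0..} x \<partial>lborel)"

lemma Kn_fin: assumes p: "1 < p" shows "Kn p < \<infinity>"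
proof -
  have "Kn p \<le> (\<integral>\<^sup>+x. indicator {0..1} x + ennreal (x powr (-p)) * indicator {1..} x \<partial>lborel)"
    unfolding Kn_def
  proof (intro nn_integral_mono)
    fix x :: real
    show "ennreal (1/(1 + x powr p)) * indicator {0..} x \<le> indicator {0..1} x + ennreal (x powr (-p)) * indicator {1..} x"
    proof (cases "0 \<le> x")
      case True
      show ?thesis
      proof (cases "x \<le> 1")
        case True
        have "0 \<le> x powr p" by simp
        then have pos: "0 < 1 + x powr p" by linarith
        then have le: "1/(1 + x powr p) \<le> 1" using \<open>0 \<le> x powr p\<close> by (simp add: divide_le_eq)
        have i1: "indicator {0..} x = (1::ennreal)" "indicator {0..1} x = (1::ennreal)"
          using True \<open>0 \<le> x\<close> by (auto simp: indicator_def)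
        have "ennreal (1/(1 + x powr p)) * indicator {0..} x \<le> 1"
          using le by (simp add: i1 ennreal_le_1)
        also have "(1::ennreal) \<le> indicator {0..1} x + ennreal (x powr (-p)) * indicator {1..} x"
          by (intro add_increasing2) (auto simp: i1)
        finally show ?thesis .
      next
        case False
        then have x1: "1 < x" by simp
        have "1/(1 + x powr p) \<le> x powr (-p)"
          using x1 by (simp add: powr_minus divide_simps)
        then show ?thesis using x1 by (simp add: indicator_def)
      qed
    qed (simp add: indicator_def)
  qed
  also have "\<dots> = (\<integral>\<^sup>+x. indicator {0..1::real} x \<partial>lborel) + (\<integral>\<^sup>+x. ennreal (x powr (-p)) * indicator {1..} x \<partial>lborel)"
    by (rule nn_integral_add) measurable
  also have "\<dots> < \<infinity>"
  proof -
    have "(\<integral>\<^sup>+x. indicator {0..1::real} x \<partial>lborel) = 1" by (subst nn_integral_indicator) auto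
    then show ?thesis using nn_tail[OF p, of 1] by simp
  qed
  finally show ?thesis .
qed

lemma Kn_pos: assumes p: "1 < p" shows "0 < Kn p"
proof -
  have "(\<integral>\<^sup>+x. ennreal (1/2) * indicator {0..1::real} x \<partial>lborel) \<le> Kn p"
    unfolding Kn_def
  proof (intro nn_integral_mono)
    fix x :: real
    show "ennreal (1/2) * indicator {0..1} x \<le> ennreal (1/(1 + x powr p)) * indicator {0..} x"
    proof (cases "0 \<le> x \<and> x \<le> 1")
      case True
      then have "x powr p \<le> 1" using p by (simp add: powr_le1)
      then have "1/2 \<le> 1/(1 + x powr p)" by (simp add: divide_simps)
      moreover have i1: "indicator {0..} x = (1::ennreal)" "indicator {0..1} x = (1::ennreal)"
          using True by (auto simp: indicator_def)
      ultimately have "ennreal (1/2) \<le> ennreal (1/(1 + x powr p))" by (intro ennreal_leI)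
      then show ?thesis unfolding i1 mult_1_right .
    qed (auto simp: indicator_def)
  qed
  moreover have "(\<integral>\<^sup>+x. ennreal (1/2) * indicator {0..1::real} x \<partial>lborel) = ennreal (1/2)"
    by (simp add: nn_integral_cmult_indicator)
  ultimately show ?thesis
    by (metis ennreal_less_zero_iff order_less_le_trans zero_less_divide_1_iff zero_less_numeral)
qed

lemma nn_scale:
  fixes p w :: real assumes p: "1 < p" and w: "0 < w"
  shows "(\<integral>\<^sup>+x. ennreal (1/(w + x powr p)) * indicator {0..} x \<partial>lborel) = ennreal (w powr (1/p - 1)) * Kn p"
proof -
  define c where "c = w powr (1/p)"
  have c: "0 < c" using w by (simp add: c_def)
  have cp: "c powr p = w" using w p by (simp add: c_def powr_powr)
  have "(\<integral>\<^sup>+x. ennreal (1/(w + x powr p)) * indicator {0..} x \<partial>lborel)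
      = ennreal \<bar>c\<bar> * (\<integral>\<^sup>+x. ennreal (1/(w + (0 + c*x) powr p)) * indicator {0..} (0 + c*x) \<partial>lborel)"
    using c by (intro nn_integral_real_affine) auto
  also have "\<dots> = (\<integral>\<^sup>+x. ennreal \<bar>c\<bar> * (ennreal (1/(w + (0 + c*x) powr p)) * indicator {0..} (0 + c*x)) \<partial>lborel)"
    by (intro nn_integral_cmult[symmetric]) measurable
  also have "\<dots> = (\<integral>\<^sup>+x. ennreal (w powr (1/p - 1)) * (ennreal (1/(1 + x powr p)) * indicator {0..} x) \<partial>lborel)"
  proof (intro nn_integral_cong)
    fix x :: real
    show "ennreal \<bar>c\<bar> * (ennreal (1/(w + (0 + c*x) powr p)) * indicator {0..} (0 + c*x)) =
          ennreal (w powr (1/p - 1)) * (ennreal (1/(1 + x powr p)) * indicator {0..} x)"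
    proof (cases "0 \<le> x")
      case True
      have "(c*x) powr p = w * x powr p" using c True cp by (simp add: powr_mult)
      moreover have "c / w = w powr (1/p - 1)" using w by (simp add: c_def powr_diff)
      moreover have "0 \<le> x powr p" by simp
      ultimately have e1: "w + (0 + c*x) powr p = w * (1 + x powr p)" by (simp add: algebra_simps)
      have "\<bar>c\<bar> * (1/(w + (0 + c*x) powr p)) = (c / w) * (1/(1 + x powr p))"
        unfolding e1 using c by simp
      also have "\<dots> = w powr (1/p - 1) * (1/(1 + x powr p))"
        using \<open>c / w = w powr (1/p - 1)\<close> by simp
      finally have "\<bar>c\<bar> * (1/(w + (0 + c*x) powr p)) = w powr (1/p - 1) * (1/(1 + x powr p))" .
      then show ?thesis using True c
        by (simp add: ennreal_mult'[symmetric] zero_le_mult_iff indicator_def)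
    next
      case False
      then have "\<not> 0 \<le> c*x" using c by (simp add: zero_le_mult_iff)
      then show ?thesis using False by simp
    qed
  qed
  also have "\<dots> = ennreal (w powr (1/p - 1)) * Kn p"
    unfolding Kn_def by (intro nn_integral_cmult) measurable
  finally show ?thesis .
qed

lemma slit_add:
  fixes w :: complex assumes w: "w \<notin> \<real>\<^sub>\<le>\<^sub>0" and r: "0 \<le> r"
  shows "w + of_real r \<notin> \<real>\<^sub>\<le>\<^sub>0"
proof
  assume "w + of_real r \<in> \<real>\<^sub>\<le>\<^sub>0"
  then obtain s where s: "w + of_real r = of_real s" "s \<le> 0" by (auto elim!: nonpos_Reals_cases)
  then have "w = of_real (s - r)" by (simp add: algebra_simps)
  moreover have "s - r \<le> 0" using s r by simp
  ultimately show False using w by (metis nonpos_Reals_of_real_iff)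
qed

lemma slit_nz:
  fixes w :: complex assumes w: "w \<notin> \<real>\<^sub>\<le>\<^sub>0" and r: "0 \<le> r"
  shows "w + of_real r \<noteq> 0"
  using slit_add[OF w r] by auto

lemma slit_delta:
  fixes w :: complex assumes w: "w \<notin> \<real>\<^sub>\<le>\<^sub>0"
  obtains d where "0 < d" "\<And>r. 0 \<le> r \<Longrightarrow> d \<le> norm (w + of_real r)"
proof (cases "0 \<le> Re w")
  case True
  have "w \<noteq> 0" using w by auto
  then have "0 < norm w" by simp
  moreover have "norm w \<le> norm (w + of_real r)" if r: "0 \<le> r" for r
  proof -
    have "(norm w)^2 = (Re w)^2 + (Im w)^2" by (simp add: cmod_power2)
    also have "\<dots> \<le> (Re w + r)^2 + (Im w)^2" using True r by (simp add: power2_eq_square algebra_simps)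
    also have "\<dots> = (norm (w + of_real r))^2" by (simp add: cmod_power2)
    finally show ?thesis by (rule power2_le_imp_le) simp
  qed
  ultimately show ?thesis using that by blast
next
  case False
  have "Im w \<noteq> 0"
  proof
    assume "Im w = 0"
    then have "w = of_real (Re w)" by (simp add: complex_eq_iff)
    then show False using w False by (metis nonpos_Reals_of_real_iff not_le less_imp_le)
  qed
  then have "0 < \<bar>Im w\<bar>" by simp
  moreover have "\<bar>Im w\<bar> \<le> norm (w + of_real r)" for r
    using abs_Im_le_cmod[of "w + of_real r"] by simp
  ultimately show ?thesis using that by blast
qed

lemma slit_lin:
  fixes w :: complex assumes w: "w \<notin> \<real>\<^sub>\<le>\<^sub>0"
  obtains c where "0 < c" "\<And>r. 0 \<le> r \<Longrightarrow> c * (1 + r) \<le> norm (w + of_real r)"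
proof -
  obtain d where d: "0 < d" "\<And>r. 0 \<le> r \<Longrightarrow> d \<le> norm (w + of_real r)"
    using slit_delta[OF w] by blast
  define D where "D = 2 * (1 + 2 * norm w)"
  define c where "c = min d (1/2) / D"
  have "0 < min d (1/2)" using d by simp
  moreover have Dpos: "0 < D" unfolding D_def by (simp add: add_pos_nonneg)
  ultimately have c: "0 < c" unfolding c_def by (rule divide_pos_pos)
  have cD: "c * D = min d (1/2)" using Dpos by (simp add: c_def)
  have "c * (1 + r) \<le> norm (w + of_real r)" if r: "0 \<le> r" for r
  proof -
    have nw: "0 \<le> norm w" by simp
    have c2: "2 * c * (1 + 2 * norm w) = min d (1/2)" using cD unfolding D_def by (simp add: algebra_simps)
    have c3: "2 * (c * (1 + 2 * norm w)) = min d (1/2)" using c2 by (simp add: algebra_simps)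
    have cle: "c \<le> c * (1 + 2 * norm w)" using c nw by (simp add: mult_le_cancel_left1)
    have m1: "min d (1/2) \<le> d" "min d (1/2) \<le> 1/2" by simp_all
    have tri: "r - norm w \<le> norm (w + of_real r)"
      using norm_diff_ineq[of "of_real r" w] r by (simp add: add.commute)
    show ?thesis
    proof (cases "r \<le> 2 * norm w")
      case True
      have "c * (1 + r) \<le> c * (1 + 2 * norm w)" using True c by simp
      also have "\<dots> \<le> min d (1/2)" using c3 \<open>0 < min d (1/2)\<close> by linarith
      also have "\<dots> \<le> d" by simp
      finally show ?thesis using d(2)[OF r] by linarith
    next
      case False
      show ?thesis
      proof (cases "1 \<le> r")
        case True
        have "c \<le> 1/4" using c3 cle m1 by linarith
        then have "c * (1 + r) \<le> (1 + r) / 4" using r by (simp add: mult_right_mono)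
        also have "\<dots> \<le> r / 2" using True by simp
        also have "\<dots> \<le> r - norm w" using False by simp
        finally show ?thesis using tri by simp
      next
        case False
        have "2 * c \<le> min d (1/2)" using c3 cle by linarith
        moreover have "c * (1 + r) \<le> c * 2" using False c by (intro mult_left_mono) auto
        ultimately have "c * (1 + r) \<le> d" using m1 by linarith
        then show ?thesis using d(2)[OF r] by linarith
      qed
    qed
  qed
  then show ?thesis using that c by blast
qed

definition Hf :: "real \<Rightarrow> complex \<Rightarrow> complex" where
  "Hf p w = (LINT x:{0..}|lborel. 1 / (w + complex_of_real (x powr p)))"

lemma Hf_integrable:
  assumes p: "1 < p" and w: "w \<notin> \<real>\<^sub>\<le>\<^sub>0"
  shows "set_integrable lborel {0..} (\<lambda>x. 1 / (w + complex_of_real (x powr p)))"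
proof -
  obtain c where c: "0 < c" "\<And>r. 0 \<le> r \<Longrightarrow> c * (1 + r) \<le> norm (w + of_real r)"
    using slit_lin[OF w] by blast
  have "(\<integral>\<^sup>+x. ennreal (norm (indicator {0..} x *\<^sub>R (1 / (w + complex_of_real (x powr p))))) \<partial>lborel)
      \<le> (\<integral>\<^sup>+x. ennreal (1/c) * (ennreal (1/(1 + x powr p)) * indicator {0..} x) \<partial>lborel)"
  proof (intro nn_integral_mono)
    fix x :: real
    show "ennreal (norm (indicator {0..} x *\<^sub>R (1 / (w + complex_of_real (x powr p)))))
       \<le> ennreal (1/c) * (ennreal (1/(1 + x powr p)) * indicator {0..} x)"
    proof (cases "0 \<le> x")
      case True
      have le: "c * (1 + x powr p) \<le> norm (w + of_real (x powr p))" using c(2)[of "x powr p"] by simp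
      have pos: "0 < c * (1 + x powr p)" using c by simp
      have npos: "0 < norm (w + of_real (x powr p))" using le pos by linarith
      have "norm (1 / (w + complex_of_real (x powr p))) = 1 / norm (w + complex_of_real (x powr p))"
        by (simp add: norm_divide)
      also have "\<dots> \<le> 1 / (c * (1 + x powr p))" using le pos npos by (intro divide_left_mono) (simp_all add: zero_less_mult_iff)
      also have "\<dots> = (1/c) * (1/(1 + x powr p))" by simp
      finally have "norm (1 / (w + complex_of_real (x powr p))) \<le> (1/c) * (1/(1 + x powr p))" .
      then show ?thesis using True c by (simp add: ennreal_mult'[symmetric] ennreal_leI)
    qed simp
  qed
  also have "\<dots> = ennreal (1/c) * Kn p" unfolding Kn_def by (intro nn_integral_cmult) measurable
  also have "\<dots> < \<infinity>" using Kn_fin[OF p] by (simp add: ennreal_mult_less_top)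
  finally have fin: "(\<integral>\<^sup>+x. ennreal (norm (indicator {0..} x *\<^sub>R (1 / (w + complex_of_real (x powr p))))) \<partial>lborel) < \<infinity>" .
  have meas: "(\<lambda>x. indicator {0..} x *\<^sub>R (1 / (w + complex_of_real (x powr p)))) \<in> borel_measurable lborel"
    by measurable
  show ?thesis unfolding set_integrable_def
    by (rule integrableI_bounded[OF meas fin])
qed

lemma cont_powr0:
  assumes p: "0 < p"
  shows "continuous_on {0..} (\<lambda>x::real. x powr p)"
  by (rule continuous_on_powr'[OF continuous_on_id continuous_on_const]) (use p in auto)

lemma trunc_holo:
  assumes p: "1 < p" and U: "convex U" "U \<subseteq> - \<real>\<^sub>\<le>\<^sub>0"
  shows "(\<lambda>w. integral {0..b} (\<lambda>x. 1 / (w + complex_of_real (x powr p)))) holomorphic_on U"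
proof -
  have cp: "continuous_on {0..} (\<lambda>x::real. x powr p)" using p by (intro cont_powr0) simp
  have nz: "w + complex_of_real (x powr p) \<noteq> 0" if "w \<in> U" for w x
    using slit_nz[of w "x powr p"] that U by auto
  have "(\<lambda>w. integral (cbox 0 b) (\<lambda>x. 1 / (w + complex_of_real (x powr p)))) holomorphic_on U"
  proof (rule leibniz_rule_holomorphic[where fx = "\<lambda>w x. - 1 / (w + complex_of_real (x powr p))^2"])
    fix w and x :: real assume w: "w \<in> U" and x: "x \<in> cbox 0 b"
    show "((\<lambda>w. 1 / (w + complex_of_real (x powr p))) has_field_derivative
            - 1 / (w + complex_of_real (x powr p))^2) (at w within U)"
      using nz[OF w, of x]
      by (auto intro!: derivative_eq_intros simp: power2_eq_square divide_simps)
  next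
    fix w assume w: "w \<in> U"
    have "continuous_on (cbox 0 b) (\<lambda>x. x powr p)"
      by (rule continuous_on_subset[OF cp]) (auto simp: cbox_interval)
    then have "continuous_on (cbox 0 b) (\<lambda>x. 1 / (w + complex_of_real (x powr p)))"
      using nz[OF w] by (auto intro!: continuous_intros)
    then show "(\<lambda>x. 1 / (w + complex_of_real (x powr p))) integrable_on cbox 0 b"
      by (rule integrable_continuous)
  next
    have c1: "continuous_on (U \<times> cbox 0 b) (\<lambda>z. snd z powr p)"
      by (rule continuous_on_compose2[OF cp continuous_on_snd]) (auto simp: cbox_interval)
    have "continuous_on (U \<times> cbox 0 b) (\<lambda>z. - 1 / (fst z + complex_of_real (snd z powr p))^2)"
      by (intro continuous_intros c1) (use nz in auto)
    then show "continuous_on (U \<times> cbox 0 b) (\<lambda>(w, x). - 1 / (w + complex_of_real (x powr p))^2)"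
      by (simp add: case_prod_unfold)
  qed (rule U(1))
  then show ?thesis by (simp add: cbox_interval)
qed

lemma tail_bound:
  assumes p: "1 < p" and w: "w \<notin> \<real>\<^sub>\<le>\<^sub>0" and n: "1 \<le> n" and nw: "2 * norm w \<le> n powr p"
  shows "norm (Hf p w - integral {0..n} (\<lambda>x. 1 / (w + complex_of_real (x powr p)))) \<le> 2 * (n powr (1-p) / (p-1))"
proof -
  let ?f = "\<lambda>x. 1 / (w + complex_of_real (x powr p))"
  have int: "set_integrable lborel {0..} ?f" by (rule Hf_integrable[OF p w])
  have int1: "set_integrable lborel {0..n} ?f" by (rule set_integrable_subset[OF int]) auto
  have int2: "set_integrable lborel {n<..} ?f" by (rule set_integrable_subset[OF int]) (use n in auto)
  have "{0..} = {0..n} \<union> {n<..}" using n by auto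
  then have "Hf p w = (LINT x:{0..n} \<union> {n<..}|lborel. ?f x)" unfolding Hf_def by simp
  also have "\<dots> = (LINT x:{0..n}|lborel. ?f x) + (LINT x:{n<..}|lborel. ?f x)"
    by (rule set_integral_Un[OF _ int1 int2]) auto
  finally have "Hf p w = (LINT x:{0..n}|lborel. ?f x) + (LINT x:{n<..}|lborel. ?f x)" .
  moreover have "integral {0..n} ?f = (LINT x:{0..n}|lborel. ?f x)"
    by (rule set_borel_integral_eq_integral(2)[OF int1, symmetric])
  ultimately have eq: "Hf p w - integral {0..n} ?f = (LINT x:{n<..}|lborel. ?f x)" by simp
  have "ennreal (norm (LINT x:{n<..}|lborel. ?f x)) \<le> (\<integral>\<^sup>+x. norm (indicator {n<..} x *\<^sub>R ?f x) \<partial>lborel)"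
    unfolding set_lebesgue_integral_def
    by (rule integral_norm_bound_ennreal) (use int2 in \<open>simp add: set_integrable_def\<close>)
  also have "\<dots> \<le> (\<integral>\<^sup>+x. ennreal 2 * (ennreal (x powr (-p)) * indicator {n..} x) \<partial>lborel)"
  proof (intro nn_integral_mono)
    fix x :: real
    show "ennreal (norm (indicator {n<..} x *\<^sub>R ?f x)) \<le> ennreal 2 * (ennreal (x powr (-p)) * indicator {n..} x)"
    proof (cases "n < x")
      case True
      have x0: "0 < x" using True n by simp
      have "n powr p \<le> x powr p" using True n p by (intro powr_mono2) auto
      then have wx: "norm w \<le> x powr p / 2" using nw by simp
      have "x powr p - norm w \<le> norm (w + complex_of_real (x powr p))"
        using norm_diff_ineq[of "complex_of_real (x powr p)" w] x0 by (simp add: add.commute)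
      then have le: "x powr p / 2 \<le> norm (w + complex_of_real (x powr p))" using wx by simp
      have xp: "0 < x powr p / 2" using x0 by simp
      have npos: "0 < norm (w + complex_of_real (x powr p))" using le xp by linarith
      have "norm (?f x) = 1 / norm (w + complex_of_real (x powr p))" by (simp add: norm_divide)
      also have "\<dots> \<le> 1 / (x powr p / 2)"
        using le xp npos by (intro divide_left_mono) (simp_all add: zero_less_mult_iff)
      also have "\<dots> = 2 * x powr (-p)" by (simp add: powr_minus divide_simps)
      finally have "norm (?f x) \<le> 2 * x powr (-p)" .
      then have "ennreal (norm (?f x)) \<le> ennreal (2 * x powr (-p))" by (rule ennreal_leI)
      also have "\<dots> = ennreal 2 * ennreal (x powr (-p))" by (rule ennreal_mult) auto
      finally show ?thesis using True by simp
    qed simp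
  qed
  also have "\<dots> = ennreal 2 * ennreal (n powr (1-p) / (p-1))"
    by (subst nn_integral_cmult) (use nn_tail[OF p, of n] n in auto)
  also have "\<dots> = ennreal (2 * (n powr (1-p) / (p-1)))" using p by (intro ennreal_mult[symmetric]) auto
  finally have "norm (LINT x:{n<..}|lborel. ?f x) \<le> 2 * (n powr (1-p) / (p-1))"
    using p by (subst (asm) ennreal_le_iff) auto
  then show ?thesis using eq by simp
qed

lemma Hf_holo:
  assumes p: "1 < p"
  shows "Hf p holomorphic_on (- \<real>\<^sub>\<le>\<^sub>0)"
proof -
  have op: "open (- \<real>\<^sub>\<le>\<^sub>0 :: complex set)" by (simp add: open_Compl)
  have "Hf p analytic_on (- \<real>\<^sub>\<le>\<^sub>0)" unfolding analytic_on_def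
  proof
    fix z :: complex assume z: "z \<in> - \<real>\<^sub>\<le>\<^sub>0"
    obtain \<rho> where \<rho>: "\<rho> > 0" "cball z \<rho> \<subseteq> - \<real>\<^sub>\<le>\<^sub>0" using op z open_contains_cball by blast
    define R where "R = norm z + \<rho>"
    let ?F = "\<lambda>n::nat. \<lambda>w. integral {0..real n} (\<lambda>x. 1/(w + complex_of_real (x powr p)))"
    have ul: "uniform_limit (cball z \<rho>) ?F (Hf p) sequentially"
    proof (rule uniform_limitI)
      fix e :: real assume e: "0 < e"
      have "((\<lambda>n. real n powr (1-p)) \<longlongrightarrow> 0) sequentially"
        using p by (intro tendsto_neg_powr filterlim_real_sequentially) auto
      then have "((\<lambda>n. 2 * (real n powr (1-p) / (p-1))) \<longlongrightarrow> 2 * (0 / (p-1))) sequentially"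
        by (intro tendsto_mult tendsto_divide tendsto_const) (use p in auto)
      then have ev1: "eventually (\<lambda>n. 2 * (real n powr (1-p) / (p-1)) < e) sequentially"
        using e by (intro order_tendstoD(2)) auto
      define N where "N = max 1 ((2*R) powr (1/p))"
      obtain m :: nat where m: "N \<le> real m" using real_arch_simple by blast
      have ev2: "eventually (\<lambda>n. N \<le> real n) sequentially"
        by (rule eventually_sequentiallyI[of m]) (use m in auto)
      show "eventually (\<lambda>n. \<forall>w\<in>cball z \<rho>. dist (?F n w) (Hf p w) < e) sequentially"
        using ev1 ev2
      proof eventually_elim
        case (elim n)
        show ?case
        proof
          fix w assume w: "w \<in> cball z \<rho>"
          have wS: "w \<notin> \<real>\<^sub>\<le>\<^sub>0" using w \<rho> by auto
          have "norm w \<le> norm z + dist z w" using norm_triangle_ineq2[of w z] by (simp add: dist_norm norm_minus_commute)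
          then have wR: "norm w \<le> R" using w by (simp add: R_def)
          have R0: "0 \<le> 2 * R" using \<rho> by (simp add: R_def)
          have n1: "1 \<le> real n" using elim(2) by (simp add: N_def)
          have "(2*R) powr (1/p) \<le> real n" using elim(2) by (simp add: N_def)
          then have "((2*R) powr (1/p)) powr p \<le> real n powr p" using p by (intro powr_mono2) auto
          also have "((2*R) powr (1/p)) powr p = 2 * R" using p R0 by (simp add: powr_powr)
          finally have "2 * norm w \<le> real n powr p" using wR by simp
          then have "norm (Hf p w - ?F n w) \<le> 2 * (real n powr (1-p) / (p-1))"
            by (intro tail_bound[OF p wS n1])
          then show "dist (?F n w) (Hf p w) < e" using elim(1) by (simp add: dist_norm norm_minus_commute)
        qed
      qed
    qed
    have "eventually (\<lambda>n. continuous_on (cball z \<rho>) (?F n) \<and> ?F n holomorphic_on ball z \<rho>) sequentially"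
    proof (intro always_eventually allI conjI)
      fix n :: nat
      have h: "?F n holomorphic_on cball z \<rho>" by (rule trunc_holo[OF p convex_cball \<rho>(2)])
      then show "continuous_on (cball z \<rho>) (?F n)" by (rule holomorphic_on_imp_continuous_on)
      show "?F n holomorphic_on ball z \<rho>" by (rule holomorphic_on_subset[OF h ball_subset_cball])
    qed
    then obtain "Hf p holomorphic_on ball z \<rho>"
      using holomorphic_uniform_limit[OF _ ul trivial_limit_sequentially] by blast
    then show "\<exists>e>0. Hf p holomorphic_on ball z e" using \<rho> by blast
  qed
  then show ?thesis using op analytic_on_open by blast
qed

lemma Hf_real:
  assumes p: "1 < p" and r: "0 < r"
  shows "Hf p (complex_of_real r) = complex_of_real (r powr (1/p - 1) * enn2real (Kn p))"
proof -
  have "Hf p (complex_of_real r) = (\<integral>x. complex_of_real (indicator {0..} x * (1 / (r + x powr p))) \<partial>lborel)"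
    unfolding Hf_def set_lebesgue_integral_def
    by (intro Bochner_Integration.integral_cong) (auto simp: indicator_def)
  also have "\<dots> = complex_of_real (\<integral>x. indicator {0..} x * (1 / (r + x powr p)) \<partial>lborel)"
    by (rule integral_complex_of_real)
  also have "(\<integral>x. indicator {0..} x * (1 / (r + x powr p)) \<partial>lborel)
      = enn2real (\<integral>\<^sup>+x. ennreal (indicator {0..} x * (1 / (r + x powr p))) \<partial>lborel)"
    by (rule integral_eq_nn_integral) (use r in \<open>auto simp: indicator_def intro!: add_pos_nonneg\<close>)
  also have "(\<integral>\<^sup>+x. ennreal (indicator {0..} x * (1 / (r + x powr p))) \<partial>lborel)
      = (\<integral>\<^sup>+x. ennreal (1/(r + x powr p)) * indicator {0..} x \<partial>lborel)"
    by (intro nn_integral_cong) (auto simp: indicator_def)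
  also have "\<dots> = ennreal (r powr (1/p - 1)) * Kn p" by (rule nn_scale[OF p r])
  finally show ?thesis by (simp add: enn2real_mult)
qed

lemma nonpos_Reals_image: "(\<real>\<^sub>\<le>\<^sub>0 :: complex set) = complex_of_real ` {..0}"
  by (auto elim!: nonpos_Reals_cases)

lemma Hf_eq:
  assumes p: "1 < p" and w: "w \<notin> \<real>\<^sub>\<le>\<^sub>0"
  shows "Hf p w = complex_of_real (enn2real (Kn p)) * w powr complex_of_real (1/p - 1)"
proof -
  let ?g = "\<lambda>w. Hf p w - complex_of_real (enn2real (Kn p)) * w powr complex_of_real (1/p - 1)"
  let ?S = "- \<real>\<^sub>\<le>\<^sub>0 :: complex set"
  have op: "open ?S" by (simp add: open_Compl)
  have conn: "connected ?S"
    using starlike_slotted_complex_plane_left[of 0] unfolding nonpos_Reals_image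
    by (rule starlike_imp_connected)
  have holo: "?g holomorphic_on ?S"
    by (intro holomorphic_intros Hf_holo[OF p]) auto
  have lim: "1 islimpt (complex_of_real ` {0<..})"
    unfolding islimpt_approachable
  proof (intro allI impI)
    fix e :: real assume e: "0 < e"
    show "\<exists>x'\<in>complex_of_real ` {0<..}. x' \<noteq> 1 \<and> dist x' 1 < e"
    proof (rule bexI[of _ "complex_of_real (1 + e/2)"])
      show "complex_of_real (1 + e/2) \<in> complex_of_real ` {0<..}" using e by (intro imageI) simp
      have "dist (complex_of_real (1 + e/2)) 1 = e/2" using e by (simp add: dist_norm)
      then show "complex_of_real (1 + e/2) \<noteq> 1 \<and> dist (complex_of_real (1 + e/2)) 1 < e"
        using e by auto
    qed
  qed
  have "?g w = 0"
  proof (rule analytic_continuation[OF holo op conn _ _ lim])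
    show "complex_of_real ` {0<..} \<subseteq> ?S" by auto
    show "1 \<in> ?S" by simp
    show "w \<in> ?S" using w by simp
    fix z assume "z \<in> complex_of_real ` {0<..}"
    then obtain r where r: "0 < r" "z = complex_of_real r" by auto
    have pw: "complex_of_real r powr complex_of_real (1/p - 1) = complex_of_real (r powr (1/p - 1))"
      by (rule powr_of_real) (use r in simp)
    show "?g z = 0" unfolding r(2) pw Hf_real[OF p r(1)] by simp
  qed
  then show ?thesis by simp
qed

lemma powr_diff_lb:
  fixes p a x :: real
  assumes p: "1 \<le> p" and a: "0 < a" and x: "a/2 \<le> x"
  shows "(a/2) powr (p-1) * \<bar>x - a\<bar> \<le> \<bar>x powr p - a powr p\<bar>"
proof -
  have der: "DERIV (\<lambda>y. y powr p) y :> p * y powr (p-1)" if "0 < y" for y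
    using has_real_derivative_powr[OF that, of p] by simp
  have mono: "(a/2) powr (p-1) \<le> p * z powr (p-1)" if "a/2 \<le> z" for z
  proof -
    have "(a/2) powr (p-1) \<le> z powr (p-1)" using that a p by (intro powr_mono2) auto
    also have "\<dots> \<le> p * z powr (p-1)" using p by (simp add: mult_le_cancel_right1)
    finally show ?thesis .
  qed
  show ?thesis
  proof (cases x a rule: linorder_cases)
    case less
    obtain z where z: "x < z" "z < a" "a powr p - x powr p = (a - x) * (p * z powr (p-1))"
      using MVT2[OF less, of "\<lambda>y. y powr p" "\<lambda>y. p * y powr (p-1)"] der x a by force
    have "(a/2) powr (p-1) * (a - x) \<le> (p * z powr (p-1)) * (a - x)"
      using mono[of z] z x less by (intro mult_right_mono) auto
    then show ?thesis using z less by (simp add: abs_if algebra_simps)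
  next
    case equal then show ?thesis by simp
  next
    case greater
    obtain z where z: "a < z" "z < x" "x powr p - a powr p = (x - a) * (p * z powr (p-1))"
      using MVT2[OF greater, of "\<lambda>y. y powr p" "\<lambda>y. p * y powr (p-1)"] der a by force
    have "(a/2) powr (p-1) * (x - a) \<le> (p * z powr (p-1)) * (x - a)"
      using mono[of z] z a greater by (intro mult_right_mono) auto
    then show ?thesis using z greater by (simp add: abs_if algebra_simps)
  qed
qed

lemma ftc_log_right:
  fixes a b :: real assumes a: "0 \<le> a" and b: "0 < b"
  shows "(\<integral>\<^sup>+x. ennreal (1 / (1 + b * (x - a))) * indicator {a..2*a} x \<partial>lborel) = ennreal (ln (1 + a * b) / b)"
proof -
  have "(\<integral>\<^sup>+x. ennreal (1 / (1 + b * (x - a))) * indicator {a..2*a} x \<partial>lborel)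
      = ennreal (ln (1 + b * (2*a - a)) / b - ln (1 + b * (a - a)) / b)"
  proof (rule nn_integral_FTC_Icc)
    show "(\<lambda>x. 1 / (1 + b * (x - a))) \<in> borel_measurable borel" by measurable
    fix x assume x: "x \<in> {a..2*a}"
    then have pos: "0 < 1 + b * (x - a)" using b by (simp add: add_pos_nonneg)
    have d1: "DERIV (\<lambda>x. ln (1 + b * (x - a))) x :> 1 / (1 + b * (x - a)) * b"
      by (rule derivative_eq_intros refl | simp add: pos)+
    have "DERIV (\<lambda>x. ln (1 + b * (x - a)) / b) x :> 1 / (1 + b * (x - a)) * b / b"
      by (rule DERIV_cdivide[OF d1])
    then show "DERIV (\<lambda>x. ln (1 + b * (x - a)) / b) x :> 1 / (1 + b * (x - a))"
      using b by simp
    show "0 \<le> 1 / (1 + b * (x - a))" using pos by simp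
  qed (use a in simp)
  then show ?thesis by (simp add: mult.commute)
qed

lemma ftc_log_left:
  fixes a b :: real assumes a: "0 \<le> a" and b: "0 < b"
  shows "(\<integral>\<^sup>+x. ennreal (1 / (1 + b * (a - x))) * indicator {0..a} x \<partial>lborel) = ennreal (ln (1 + a * b) / b)"
proof -
  have "(\<integral>\<^sup>+x. ennreal (1 / (1 + b * (a - x))) * indicator {0..a} x \<partial>lborel)
      = ennreal ((- ln (1 + b * (a - a)) / b) - (- ln (1 + b * (a - 0)) / b))"
  proof (rule nn_integral_FTC_Icc)
    show "(\<lambda>x. 1 / (1 + b * (a - x))) \<in> borel_measurable borel" by measurable
    fix x assume x: "x \<in> {0..a}"
    then have pos: "0 < 1 + b * (a - x)" using b by (simp add: add_pos_nonneg)
    have d1: "DERIV (\<lambda>x. ln (1 + b * (a - x))) x :> 1 / (1 + b * (a - x)) * (- b)"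
      by (rule derivative_eq_intros refl | simp add: pos)+
    have "DERIV (\<lambda>x. ln (1 + b * (a - x)) / b) x :> 1 / (1 + b * (a - x)) * (- b) / b"
      by (rule DERIV_cdivide[OF d1])
    then have "DERIV (\<lambda>x. - (ln (1 + b * (a - x)) / b)) x :> - (1 / (1 + b * (a - x)) * (- b) / b)"
      by (rule DERIV_minus)
    then show "DERIV (\<lambda>x. - ln (1 + b * (a - x)) / b) x :> 1 / (1 + b * (a - x))"
      using b by simp
    show "0 \<le> 1 / (1 + b * (a - x))" using pos by simp
  qed (use a in simp)
  then show ?thesis by (simp add: mult.commute)
qed

definition Gf :: "real \<Rightarrow> real \<Rightarrow> ennreal" where
  "Gf p t = (\<integral>\<^sup>+x. ennreal (1 / (1 + \<bar>t + x powr p\<bar>)) * indicator {0..} x \<partial>lborel)"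

definition Kr :: "real \<Rightarrow> real" where "Kr p = enn2real (Kn p)"

lemma Kn_Kr: "1 < p \<Longrightarrow> Kn p = ennreal (Kr p)"
  using Kn_fin[of p] by (simp add: Kr_def less_top)

lemma Kr_pos: "1 < p \<Longrightarrow> 0 < Kr p"
  using Kn_fin[of p] Kn_pos[of p] by (simp add: Kr_def enn2real_positive_iff less_top)

lemma G_pos:
  assumes p: "1 < p" and t: "0 \<le> t"
  shows "Gf p t = ennreal ((1+t) powr (1/p - 1) * Kr p)"
proof -
  have "Gf p t = (\<integral>\<^sup>+x. ennreal (1 / ((1 + t) + x powr p)) * indicator {0..} x \<partial>lborel)"
    unfolding Gf_def
  proof (intro nn_integral_cong)
    fix x :: real
    have "0 \<le> x powr p" by simp
    then have "\<bar>t + x powr p\<bar> = t + x powr p" using t by simp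
    then show "ennreal (1 / (1 + \<bar>t + x powr p\<bar>)) * indicator {0..} x = ennreal (1 / ((1 + t) + x powr p)) * indicator {0..} x"
      by (simp add: add.assoc)
  qed
  also have "\<dots> = ennreal ((1+t) powr (1/p - 1)) * Kn p" using t by (intro nn_scale[OF p]) simp
  finally show ?thesis using Kn_Kr[OF p] Kr_pos[OF p] by (simp add: ennreal_mult)
qed

lemma G_small:
  assumes p: "1 < p" and t: "t < 0" "-t \<le> 1"
  shows "Gf p t \<le> ennreal (2 * Kr p)"
proof -
  have "Gf p t \<le> (\<integral>\<^sup>+x. ennreal 2 * (ennreal (1 / (1 + x powr p)) * indicator {0..} x) \<partial>lborel)"
    unfolding Gf_def
  proof (intro nn_integral_mono)
    fix x :: real
    have xp: "0 \<le> x powr p" by simp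
    have h1: "1 \<le> 1 + \<bar>t + x powr p\<bar>" by simp
    have h2: "1 + (t + x powr p) \<le> 1 + \<bar>t + x powr p\<bar>" by simp
    have aux: "1 + X \<le> 2*(1+(A::real))" if "1 \<le> 1 + A" "1 + (s + X) \<le> 1 + A" "-s \<le> (1::real)" for A X s :: real
      using that by simp
    have "1 + x powr p \<le> 2 * (1 + \<bar>t + x powr p\<bar>)" by (rule aux[OF h1 h2 t(2)])
    then have "(1 + x powr p) / 2 \<le> 1 + \<bar>t + x powr p\<bar>" by simp
    moreover have "0 < (1 + x powr p) / 2" using xp by simp
    ultimately have "1 / (1 + \<bar>t + x powr p\<bar>) \<le> 1 / ((1 + x powr p) / 2)"
      by (intro divide_left_mono) (auto intro: mult_pos_pos)
    also have "\<dots> = 2 * (1 / (1 + x powr p))" by simp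
    finally have "ennreal (1 / (1 + \<bar>t + x powr p\<bar>)) \<le> ennreal 2 * ennreal (1 / (1 + x powr p))"
      by (subst ennreal_mult[symmetric]) (auto intro: ennreal_leI)
    then show "ennreal (1 / (1 + \<bar>t + x powr p\<bar>)) * indicator {0..} x \<le> ennreal 2 * (ennreal (1 / (1 + x powr p)) * indicator {0..} x)"
      by (simp add: indicator_def)
  qed
  also have "\<dots> = ennreal 2 * Kn p" unfolding Kn_def by (rule nn_integral_cmult) measurable
  also have "\<dots> = ennreal (2 * Kr p)" using Kn_Kr[OF p] Kr_pos[OF p] by (simp add: ennreal_mult)
  finally show ?thesis .
qed

lemma r1:
  fixes T p :: real assumes T: "0 < T" and p: "1 < p"
  shows "T powr (1/p) / (1+T) \<le> (1+T) powr (1/p - 1)"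
proof -
  have "T powr (1/p) \<le> (1+T) powr (1/p)" using T p by (intro powr_mono2) auto
  then have "T powr (1/p) / (1+T) \<le> (1+T) powr (1/p) / (1+T)" using T by (simp add: divide_right_mono)
  also have "\<dots> = (1+T) powr (1/p - 1)" using T by (simp add: powr_diff)
  finally show ?thesis .
qed

lemma r2:
  fixes T p :: real assumes T: "1 < T" and p: "1 < p"
  defines "a \<equiv> T powr (1/p)"
  defines "b \<equiv> (a/2) powr (p-1)"
  shows "a * b \<le> T" and "1 / b \<le> 2 powr p * (1+T) powr (1/p - 1)"
proof -
  have a0: "0 < a" using T by (simp add: a_def)
  have aT: "a powr p = T" using T p by (simp add: a_def powr_powr)
  have "b \<le> a powr (p-1)" unfolding b_def using a0 p by (intro powr_mono2) auto
  then have "a * b \<le> a * a powr (p-1)" using a0 by (simp add: mult_left_mono)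
  also have "a * a powr (p-1) = a powr p" using a0 by (simp add: powr_add[symmetric] powr_mult_base)
  finally show "a * b \<le> T" using aT by simp
  have "1 / b = (a/2) powr (1-p)" unfolding b_def using a0 by (simp add: powr_minus_divide[symmetric])
  also have "\<dots> = a powr (1-p) / 2 powr (1-p)" using a0 by (simp add: powr_divide)
  also have "a powr (1-p) = T powr (1/p - 1)" using T p by (simp add: a_def powr_powr field_simps)
  also have "T powr (1/p - 1) \<le> ((1+T)/2) powr (1/p - 1)"
    using T p by (intro powr_mono2') (auto simp: field_simps)
  also have "((1+T)/2) powr (1/p - 1) = (1+T) powr (1/p - 1) / 2 powr (1/p - 1)" using T by (simp add: powr_divide)
  finally have "1 / b \<le> (1+T) powr (1/p - 1) / 2 powr (1/p - 1) / 2 powr (1-p)"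
    by (simp add: divide_right_mono)
  also have "\<dots> = (1+T) powr (1/p - 1) * 2 powr (p - 1/p)"
    by (simp add: powr_diff[symmetric] divide_inverse powr_minus[symmetric] powr_add[symmetric] algebra_simps)
  also have "\<dots> \<le> (1+T) powr (1/p - 1) * 2 powr p"
    using p by (intro mult_left_mono powr_mono) auto
  finally show "1 / b \<le> 2 powr p * (1+T) powr (1/p - 1)" by (simp add: mult.commute)
qed


lemma G_big:
  assumes p: "1 < p" and t: "t < 0" and T1: "1 < -t"
  shows "Gf p t \<le> ennreal ((1 - t) powr (1/p - 1) * (1 + 4 * Kr p) + 2 * 2 powr p * ((1 - t) powr (1/p - 1) * ln (1 - t)))"
proof -
  define T where "T = -t"
  define a where "a = T powr (1/p)"
  define b where "b = (a/2) powr (p-1)"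
  have T0: "1 < T" using T1 by (simp add: T_def)
  have a0: "0 < a" using T0 by (simp add: a_def)
  have b0: "0 < b" using a0 by (simp add: b_def)
  have aT: "a powr p = T" using T0 p by (simp add: a_def powr_powr)
  have tT: "t = - T" by (simp add: T_def)
  have pw: "ennreal (1/(1+\<bar>t + x powr p\<bar>)) * indicator {0..} x \<le>
      ennreal (2/(1+T)) * indicator {0..a/2} x +
      ((ennreal (1/(1+b*(a-x))) * indicator {0..a} x + ennreal (1/(1+b*(x-a))) * indicator {a..2*a} x) +
      ennreal 4 * (ennreal (1/((1+T) + x powr p)) * indicator {0..} x))" for x :: real
  proof -
    consider "x < 0" | "0 \<le> x" "x \<le> a/2" | "a/2 \<le> x" "x \<le> a" | "a \<le> x" "x \<le> 2*a" | "2*a < x" by linarith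
    then show ?thesis
    proof cases
      case 1 then show ?thesis by simp
    next
      case 2
      have "x powr p \<le> (a/2) powr p" using 2 p by (intro powr_mono2) auto
      also have "\<dots> = T / 2 powr p" using a0 aT by (simp add: powr_divide)
      also have "\<dots> \<le> T / 2" 
      proof -
        have "2 powr 1 \<le> 2 powr p" using p by (intro powr_mono) auto
        then show ?thesis using T0 by (intro divide_left_mono) auto
      qed
      finally have xp: "x powr p \<le> T / 2" .
      have ab: "\<bar>t + x powr p\<bar> = T - x powr p" using xp T0 tT by simp
      have "(1 + T) / 2 \<le> 1 + \<bar>t + x powr p\<bar>" unfolding ab using xp T0 by (simp add: field_simps)
      moreover have "0 < (1 + T) / 2" using T0 by simp
      ultimately have "1 / (1 + \<bar>t + x powr p\<bar>) \<le> 1 / ((1 + T) / 2)"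
        by (intro divide_left_mono) (auto intro: mult_pos_pos)
      then have le: "ennreal (1 / (1 + \<bar>t + x powr p\<bar>)) \<le> ennreal (2 / (1 + T))" by (intro ennreal_leI) simp
      have i: "indicator {0..} x = (1::ennreal)" "indicator {0..a/2} x = (1::ennreal)" using 2 by auto
      have "ennreal (1/(1+\<bar>t + x powr p\<bar>)) * indicator {0..} x \<le> ennreal (2/(1+T)) * indicator {0..a/2} x"
        using le by (simp add: i)
      then show ?thesis by (intro add_increasing2) auto
    next
      case 3
      have "b * \<bar>x - a\<bar> \<le> \<bar>x powr p - a powr p\<bar>" unfolding b_def using p a0 3 by (intro powr_diff_lb) auto
      then have "1 + b * (a - x) \<le> 1 + \<bar>t + x powr p\<bar>" using 3 aT tT by simp
      moreover have "0 < 1 + b * (a - x)" using 3 b0 by (simp add: add_pos_nonneg)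
      ultimately have "1 / (1 + \<bar>t + x powr p\<bar>) \<le> 1 / (1 + b * (a - x))"
        by (intro divide_left_mono) auto
      then have le: "ennreal (1 / (1 + \<bar>t + x powr p\<bar>)) \<le> ennreal (1 / (1 + b * (a - x)))" by (intro ennreal_leI)
      have i: "indicator {0..} x = (1::ennreal)" "indicator {0..a} x = (1::ennreal)" using 3 a0 by auto
      have "ennreal (1/(1+\<bar>t + x powr p\<bar>)) * indicator {0..} x \<le> ennreal (1/(1+b*(a-x))) * indicator {0..a} x"
        using le by (simp add: i)
      then show ?thesis by (intro add_increasing add_increasing2) auto
    next
      case 4
      have "b * \<bar>x - a\<bar> \<le> \<bar>x powr p - a powr p\<bar>" unfolding b_def using p a0 4 by (intro powr_diff_lb) auto
      then have "1 + b * (x - a) \<le> 1 + \<bar>t + x powr p\<bar>" using 4 aT tT by simp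
      moreover have "0 < 1 + b * (x - a)" using 4 b0 by (simp add: add_pos_nonneg)
      ultimately have "1 / (1 + \<bar>t + x powr p\<bar>) \<le> 1 / (1 + b * (x - a))"
        by (intro divide_left_mono) auto
      then have le: "ennreal (1 / (1 + \<bar>t + x powr p\<bar>)) \<le> ennreal (1 / (1 + b * (x - a)))" by (intro ennreal_leI)
      have i: "indicator {0..} x = (1::ennreal)" "indicator {a..2*a} x = (1::ennreal)" using 4 a0 by auto
      have "ennreal (1/(1+\<bar>t + x powr p\<bar>)) * indicator {0..} x \<le> ennreal (1/(1+b*(x-a))) * indicator {a..2*a} x"
        using le by (simp add: i)
      then show ?thesis by (intro add_increasing add_increasing2) auto
    next
      case 5
      have "(2*a) powr p \<le> x powr p" using 5 a0 p by (intro powr_mono2) auto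
      moreover have "(2*a) powr p = 2 powr p * T" using a0 aT by (simp add: powr_mult)
      moreover have "2 powr 1 \<le> 2 powr p" using p by (intro powr_mono) auto
      ultimately have xp: "2 * T \<le> x powr p" using T0
        by (metis mult_right_mono order_trans less_le_not_le powr_one_eq_one powr_one numeral_le_one_iff
            dual_order.trans le_less zero_le_numeral linorder_not_le less_trans zero_less_one)
      have "((1 + T) + x powr p) / 4 \<le> 1 + \<bar>t + x powr p\<bar>"
      proof -
        have "\<bar>t + x powr p\<bar> = x powr p - T" using xp T0 tT by simp
        then show ?thesis using xp T0 by simp
      qed
      moreover have "0 < ((1 + T) + x powr p) / 4" using T0 by (simp add: add_pos_nonneg)
      ultimately have "1 / (1 + \<bar>t + x powr p\<bar>) \<le> 1 / (((1 + T) + x powr p) / 4)"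
        by (intro divide_left_mono) (auto intro: mult_pos_pos)
      also have "\<dots> = 4 * (1 / ((1 + T) + x powr p))" by simp
      finally have le4: "1 / (1 + \<bar>t + x powr p\<bar>) \<le> 4 * (1 / ((1 + T) + x powr p))" .
      have nn: "0 \<le> 1 / ((1 + T) + x powr p)" using T0 by (simp add: add_nonneg_nonneg)
      have "ennreal (1 / (1 + \<bar>t + x powr p\<bar>)) \<le> ennreal (4 * (1 / ((1 + T) + x powr p)))"
        using le4 by (rule ennreal_leI)
      also have "\<dots> = ennreal 4 * ennreal (1 / ((1 + T) + x powr p))"
        by (rule ennreal_mult) (use nn in auto)
      finally have "ennreal (1 / (1 + \<bar>t + x powr p\<bar>)) \<le> ennreal 4 * ennreal (1 / ((1 + T) + x powr p))" .
      then have "ennreal (1/(1+\<bar>t + x powr p\<bar>)) * indicator {0..} x \<le> ennreal 4 * (ennreal (1/((1+T) + x powr p)) * indicator {0..} x)"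
        using 5 a0 by (simp add: indicator_def)
      then show ?thesis by (intro add_increasing) auto
    qed
  qed
  have "Gf p t \<le> (\<integral>\<^sup>+x. ennreal (2/(1+T)) * indicator {0..a/2} x +
      ((ennreal (1/(1+b*(a-x))) * indicator {0..a} x + ennreal (1/(1+b*(x-a))) * indicator {a..2*a} x) +
      ennreal 4 * (ennreal (1/((1+T) + x powr p)) * indicator {0..} x)) \<partial>lborel)"
    unfolding Gf_def by (intro nn_integral_mono pw)
  also have "\<dots> = (\<integral>\<^sup>+x. ennreal (2/(1+T)) * indicator {0..a/2} x \<partial>lborel) +
      (((\<integral>\<^sup>+x. ennreal (1/(1+b*(a-x))) * indicator {0..a} x \<partial>lborel) + (\<integral>\<^sup>+x. ennreal (1/(1+b*(x-a))) * indicator {a..2*a} x \<partial>lborel)) +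
      ennreal 4 * (\<integral>\<^sup>+x. ennreal (1/((1+T) + x powr p)) * indicator {0..} x \<partial>lborel))"
    by (simp add: nn_integral_add nn_integral_cmult)
  also have "\<dots> = ennreal (2/(1+T)) * ennreal (a/2) + ((ennreal (ln (1 + a*b) / b) + ennreal (ln (1 + a*b) / b)) +
      ennreal 4 * (ennreal ((1+T) powr (1/p - 1)) * ennreal (Kr p)))"
    using a0 b0 T0 by (simp add: nn_integral_cmult_indicator ftc_log_left ftc_log_right nn_scale[OF p] Kn_Kr[OF p])
  also have "\<dots> = ennreal (2/(1+T) * (a/2) + (2 * (ln (1 + a*b) / b) + 4 * ((1+T) powr (1/p - 1) * Kr p)))"
  proof -
    have l0: "0 \<le> ln (1 + a*b) / b" using a0 b0 by simp
    have k0: "0 \<le> (1+T) powr (1/p - 1) * Kr p" using Kr_pos[OF p] by simp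
    have q1: "ennreal (2/(1+T)) * ennreal (a/2) = ennreal (2/(1+T) * (a/2))"
      by (rule ennreal_mult[symmetric]) (use a0 T0 in auto)
    have q2: "ennreal (ln (1 + a*b) / b) + ennreal (ln (1 + a*b) / b) = ennreal (2 * (ln (1 + a*b) / b))"
      using l0 by (simp add: ennreal_plus[symmetric] del: ennreal_plus)
    have q3: "ennreal 4 * (ennreal ((1+T) powr (1/p - 1)) * ennreal (Kr p)) = ennreal (4 * ((1+T) powr (1/p - 1) * Kr p))"
      using Kr_pos[OF p] by (simp add: ennreal_mult)
    have q4: "ennreal (2 * (ln (1 + a*b) / b)) + ennreal (4 * ((1+T) powr (1/p - 1) * Kr p))
        = ennreal (2 * (ln (1 + a*b) / b) + 4 * ((1+T) powr (1/p - 1) * Kr p))"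
      using l0 k0 by (simp add: ennreal_plus[symmetric] del: ennreal_plus)
    have q5: "ennreal (2/(1+T) * (a/2)) + ennreal (2 * (ln (1 + a*b) / b) + 4 * ((1+T) powr (1/p - 1) * Kr p))
        = ennreal (2/(1+T) * (a/2) + (2 * (ln (1 + a*b) / b) + 4 * ((1+T) powr (1/p - 1) * Kr p)))"
      using l0 k0 a0 T0 by (intro ennreal_plus[symmetric]) auto
    show ?thesis unfolding q1 q2 q3 q4 q5 ..
  qed
  also have "\<dots> \<le> ennreal ((1 - t) powr (1/p - 1) * (1 + 4 * Kr p) + 2 * 2 powr p * ((1 - t) powr (1/p - 1) * ln (1 - t)))"
  proof (intro ennreal_leI)
    have "2/(1+T) * (a/2) = a / (1+T)" using T0 by (simp add: field_simps)
    then have e1: "2/(1+T) * (a/2) \<le> (1+T) powr (1/p - 1)" using r1[of T p] T0 p by (simp only: a_def)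
    have ab: "a * b \<le> T" and ib: "1 / b \<le> 2 powr p * (1+T) powr (1/p - 1)"
      using r2[of T p] T0 p by (simp_all add: a_def b_def)
    have ab0: "0 < a*b" using a0 b0 by simp
    have "ln (1 + a*b) \<le> ln (1 + T)" using ab ab0 by (subst ln_le_cancel_iff) auto
    moreover have "0 \<le> ln (1 + a*b)" using ab0 by simp
    ultimately have "ln (1 + a*b) * (1/b) \<le> ln (1 + T) * (2 powr p * (1+T) powr (1/p - 1))"
      using ib b0 T0 by (intro mult_mono) auto
    then have e2: "2 * (ln (1 + a*b) / b) \<le> 2 * 2 powr p * ((1+T) powr (1/p - 1) * ln (1+T))"
      by (simp add: algebra_simps)
    show "2/(1+T) * (a/2) + (2 * (ln (1 + a*b) / b) + 4 * ((1+T) powr (1/p - 1) * Kr p))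
        \<le> (1 - t) powr (1/p - 1) * (1 + 4 * Kr p) + 2 * 2 powr p * ((1 - t) powr (1/p - 1) * ln (1 - t))"
      using e1 e2 tT by (simp add: algebra_simps)
  qed
  finally show ?thesis .
qed


definition Bd :: "real \<Rightarrow> real \<Rightarrow> real" where
  "Bd p t = (1 + \<bar>t\<bar>) powr (1/p - 1) + indicator {..0} t * (ln (1 + \<bar>t\<bar>) * (1 + \<bar>t\<bar>) powr (1/p - 1))"

definition Cp :: "real \<Rightarrow> real" where "Cp p = 1 + 4 * Kr p + 2 * 2 powr p"

lemma Bd_ge: "(1 + \<bar>t\<bar>) powr (1/p - 1) \<le> Bd p t"
proof -
  have "0 \<le> ln (1 + \<bar>t\<bar>) * (1 + \<bar>t\<bar>) powr (1/p - 1)" by simp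
  then show ?thesis unfolding Bd_def by (simp add: indicator_def)
qed

lemma Bd_nn: "0 \<le> Bd p t"
  using Bd_ge[of t p] by (meson order_trans powr_ge_zero)

lemma G_bound:
  assumes p: "1 < p"
  shows "Gf p t \<le> ennreal (Cp p * Bd p t)"
proof -
  have K0: "0 < Kr p" by (rule Kr_pos[OF p])
  have e0: "1/p - 1 \<le> 0" using p by (simp add: field_simps)
  have C1: "4 * Kr p \<le> Cp p" "1 + 4 * Kr p \<le> Cp p" "2 * 2 powr p \<le> Cp p" "Kr p \<le> Cp p"
    using K0 by (auto simp: Cp_def)
  consider "0 \<le> t" | "t < 0" "-t \<le> 1" | "t < 0" "1 < -t" by linarith
  then show ?thesis
  proof cases
    case 1
    have "Gf p t = ennreal ((1+t) powr (1/p - 1) * Kr p)" by (rule G_pos[OF p 1])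
    also have "\<dots> \<le> ennreal (Cp p * Bd p t)"
    proof (intro ennreal_leI)
      have "(1+t) powr (1/p - 1) * Kr p \<le> Bd p t * Cp p"
        using Bd_ge[of t p] Bd_nn[of p t] 1 C1(4) K0 by (intro mult_mono) auto
      then show "(1+t) powr (1/p - 1) * Kr p \<le> Cp p * Bd p t" by (simp add: mult.commute)
    qed
    finally show ?thesis .
  next
    case 2
    have "Gf p t \<le> ennreal (2 * Kr p)" by (rule G_small[OF p 2])
    also have "\<dots> \<le> ennreal (Cp p * Bd p t)"
    proof (intro ennreal_leI)
      have "2 powr (1/p - 1) \<le> (1 + \<bar>t\<bar>) powr (1/p - 1)" using 2 e0 by (intro powr_mono2') auto
      moreover have "2 powr (-1) \<le> 2 powr (1/p - 1)" using p by (intro powr_mono) auto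
      ultimately have "1/2 \<le> Bd p t" using Bd_ge[of t p] by (simp add: powr_minus)
      then have "4 * Kr p * (1/2) \<le> Cp p * Bd p t" using C1(1) K0 by (intro mult_mono) auto
      then show "2 * Kr p \<le> Cp p * Bd p t" by simp
    qed
    finally show ?thesis .
  next
    case 3
    have at: "\<bar>t\<bar> = - t" using 3 by simp
    have "Gf p t \<le> ennreal ((1 - t) powr (1/p - 1) * (1 + 4 * Kr p) + 2 * 2 powr p * ((1 - t) powr (1/p - 1) * ln (1 - t)))"
      by (rule G_big[OF p 3])
    also have "\<dots> \<le> ennreal (Cp p * Bd p t)"
    proof (intro ennreal_leI)
      have l0: "0 \<le> (1 - t) powr (1/p - 1) * ln (1 - t)" using 3 by simp
      have "(1 - t) powr (1/p - 1) * (1 + 4 * Kr p) \<le> (1 - t) powr (1/p - 1) * Cp p"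
        using C1(2) by (intro mult_left_mono) auto
      moreover have "2 * 2 powr p * ((1 - t) powr (1/p - 1) * ln (1 - t)) \<le> Cp p * ((1 - t) powr (1/p - 1) * ln (1 - t))"
        using C1(3) l0 by (intro mult_right_mono) auto
      moreover have "Bd p t = (1 - t) powr (1/p - 1) + (1 - t) powr (1/p - 1) * ln (1 - t)"
        unfolding Bd_def using 3 at by (simp add: indicator_def)
      ultimately show "(1 - t) powr (1/p - 1) * (1 + 4 * Kr p) + 2 * 2 powr p * ((1 - t) powr (1/p - 1) * ln (1 - t)) \<le> Cp p * Bd p t"
        by (simp add: algebra_simps)
    qed
    finally show ?thesis .
  qed
qed

lemma im_inv_powr:
  fixes w :: complex assumes w: "0 < Im w"
  shows "- Im (inverse (w powr complex_of_real a)) = norm w powr (-a) * sin (a * Im (Ln w))"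
proof -
  have w0: "w \<noteq> 0" using w by auto
  have "inverse (w powr complex_of_real a) = exp (- (complex_of_real a * Ln w))"
    using w0 by (simp add: powr_def exp_minus)
  then have "- Im (inverse (w powr complex_of_real a)) = - (exp (- (a * ln (norm w))) * sin (- (a * Im (Ln w))))"
    using w0 by (simp add: Im_exp)
  also have "\<dots> = norm w powr (-a) * sin (a * Im (Ln w))"
    using w0 by (simp add: powr_def)
  finally show ?thesis .
qed

lemma arg_bounds:
  fixes w :: complex assumes w: "0 < Im w"
  shows "0 < Im (Ln w)" "Im (Ln w) < pi" "Re w \<le> 0 \<Longrightarrow> pi/2 \<le> Im (Ln w)"
proof -
  show "0 < Im (Ln w)" "Im (Ln w) < pi" using Im_Ln_pos_lt_imp[OF w] by auto
  assume r: "Re w \<le> 0"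
  have w0: "w \<noteq> 0" using w by auto
  have "\<not> \<bar>Im (Ln w)\<bar> < pi/2" using Re_Ln_pos_lt[OF w0] r by simp
  then show "pi/2 \<le> Im (Ln w)" using Im_Ln_pos_lt_imp[OF w] by simp
qed

lemma sin_lb:
  fixes a \<theta> :: real assumes a: "0 < a" "a < 1" and th: "pi/2 \<le> \<theta>" "\<theta> \<le> pi"
  shows "min (sin (a * pi / 2)) (sin ((1 - a) * pi)) \<le> sin (a * \<theta>)"
proof (cases "a * \<theta> \<le> pi/2")
  case True
  have f1: "0 \<le> a * pi / 2" using a by simp
  have "a * (pi / 2) \<le> a * \<theta>" using th a by (intro mult_left_mono) auto
  then have f2: "a * pi / 2 \<le> a * \<theta>" by simp
  have "sin (a * pi / 2) \<le> sin (a * \<theta>)"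
    by (rule sin_monotone_2pi_le) (use f1 f2 True in linarith)+
  then show ?thesis by simp
next
  case False
  have "a * \<theta> \<le> a * pi" using th a by (intro mult_left_mono) auto
  then have "sin ((1 - a) * pi) \<le> sin (pi - a * \<theta>)"
    using False a by (intro sin_monotone_2pi_le) (auto simp: algebra_simps)
  also have "sin (pi - a * \<theta>) = sin (a * \<theta>)" by simp
  finally show ?thesis by simp
qed

lemma sin_lb_pos:
  fixes a :: real assumes a: "0 < a" "a < 1"
  shows "0 < min (sin (a * pi / 2)) (sin ((1 - a) * pi))"
  using a by (auto intro!: sin_gt_zero)

lemma g_nonneg:
  fixes w :: complex assumes w: "0 < Im w" and a: "0 < a" "a < 1"
  shows "0 \<le> - Im (inverse (w powr complex_of_real a))"
proof -
  have "0 < a * Im (Ln w)" using arg_bounds(1)[OF w] a by simp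
  moreover have "a * Im (Ln w) < pi"
  proof -
    have "a * Im (Ln w) \<le> 1 * Im (Ln w)" using a arg_bounds(1)[OF w] by (intro mult_right_mono) auto
    then show ?thesis using arg_bounds(2)[OF w] by simp
  qed
  ultimately have "0 < sin (a * Im (Ln w))" by (rule sin_gt_zero)
  then show ?thesis unfolding im_inv_powr[OF w] by simp
qed

lemma N5:
  fixes u :: real
  shows "(\<integral>\<^sup>+ y. ennreal (1 / (u^2 + y^2)) * indicator {1..} y \<partial>lborel) \<le> ennreal (2 / (1 + \<bar>u\<bar>))"
proof -
  have "(\<integral>\<^sup>+ y. ennreal (1 / (u^2 + y^2)) * indicator {1..} y \<partial>lborel)
      \<le> (\<integral>\<^sup>+ y. ennreal (2 / (\<bar>u\<bar> + y)^2) * indicator {1..} y \<partial>lborel)"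
  proof (intro nn_integral_mono)
    fix y :: real
    show "ennreal (1 / (u^2 + y^2)) * indicator {1..} y \<le> ennreal (2 / (\<bar>u\<bar> + y)^2) * indicator {1..} y"
    proof (cases "1 \<le> y")
      case True
      have "(\<bar>u\<bar> + y)^2 \<le> 2 * (u^2 + y^2)"
      proof -
        have "0 \<le> (\<bar>u\<bar> - y)^2" by simp
        then show ?thesis by (simp add: power2_eq_square algebra_simps)
      qed
      moreover have "0 < (\<bar>u\<bar> + y)^2" using True by simp
      moreover have "0 < u^2 + y^2" using True by (simp add: add_nonneg_pos)
      ultimately have "1 / (u^2 + y^2) \<le> 2 / (\<bar>u\<bar> + y)^2"
        using True by (simp add: divide_simps add_pos_nonneg)
      then show ?thesis using True by (simp add: ennreal_leI)
    qed simp
  qed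
  also have "\<dots> = ennreal (0 - (- 2 / (\<bar>u\<bar> + 1)))"
  proof (rule nn_integral_FTC_atLeast)
    show "(\<lambda>y. 2 / (\<bar>u\<bar> + y)^2) \<in> borel_measurable borel" by measurable
    fix y :: real assume y: "1 \<le> y"
    then have pos: "0 < \<bar>u\<bar> + y" by simp
    show "DERIV (\<lambda>y. - 2 / (\<bar>u\<bar> + y)) y :> 2 / (\<bar>u\<bar> + y)^2"
      using pos by (auto intro!: derivative_eq_intros simp: power2_eq_square)
    show "0 \<le> 2 / (\<bar>u\<bar> + y)^2" by simp
  next
    show "((\<lambda>y. - 2 / (\<bar>u\<bar> + y)) \<longlongrightarrow> 0) at_top"
      by real_asymp
  qed
  also have "\<dots> = ennreal (2 / (1 + \<bar>u\<bar>))" by (simp add: add.commute)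
  finally show ?thesis .
qed


lemma N6:
  assumes a: "0 < a" "a < 1" and t: "t \<le> 0"
  shows "ennreal (min (sin (a * pi / 2)) (sin ((1 - a) * pi)) * 2 powr (-a) * (ln (\<bar>t\<bar> + 1) / (1 + \<bar>t\<bar>) powr a))
    \<le> (\<integral>\<^sup>+ y. ennreal (- Im (inverse ((\<i> * complex_of_real y + complex_of_real t) powr complex_of_real a)) / y) * indicator {1..} y \<partial>lborel)"
proof -
  define c where "c = min (sin (a * pi / 2)) (sin ((1 - a) * pi))"
  have c0: "0 < c" unfolding c_def by (rule sin_lb_pos[OF a])
  define T where "T = - t"
  have T0: "0 \<le> T" using t by (simp add: T_def)
  have aT: "\<bar>t\<bar> = T" using t by (simp add: T_def)
  define k where "k = c * (2 * (1 + T)) powr (-a)"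
  have k0: "0 \<le> k" using c0 by (simp add: k_def)
  have "(\<integral>\<^sup>+ y. ennreal k * (ennreal (1 / y) * indicator {1..1+T} y) \<partial>lborel)
      \<le> (\<integral>\<^sup>+ y. ennreal (- Im (inverse ((\<i> * complex_of_real y + complex_of_real t) powr complex_of_real a)) / y) * indicator {1..} y \<partial>lborel)"
  proof (intro nn_integral_mono)
    fix y :: real
    show "ennreal k * (ennreal (1 / y) * indicator {1..1+T} y) \<le> ennreal (- Im (inverse ((\<i> * complex_of_real y + complex_of_real t) powr complex_of_real a)) / y) * indicator {1..} y"
    proof (cases "1 \<le> y \<and> y \<le> 1 + T")
      case True
      define w where "w = \<i> * complex_of_real y + complex_of_real t"
      have wI: "Im w = y" and wR: "Re w = t" by (simp_all add: w_def)
      have w: "0 < Im w" using True wI by simp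
      have th: "pi/2 \<le> Im (Ln w)" "Im (Ln w) \<le> pi" using arg_bounds[OF w] wR t by auto
      have s: "c \<le> sin (a * Im (Ln w))" unfolding c_def by (rule sin_lb[OF a th])
      have nw: "norm w \<le> 2 * (1 + T)"
      proof -
        have "norm w \<le> \<bar>Re w\<bar> + \<bar>Im w\<bar>" by (rule cmod_le)
        also have "\<dots> = T + y" using wI wR aT True by simp
        also have "\<dots> \<le> 2 * (1 + T)" using True by simp
        finally show ?thesis .
      qed
      have nw0: "0 < norm w" using w by auto
      have pw: "(2 * (1 + T)) powr (-a) \<le> norm w powr (-a)" using nw nw0 a by (intro powr_mono2') auto
      have "k \<le> sin (a * Im (Ln w)) * norm w powr (-a)"
        unfolding k_def using pw s c0 by (intro mult_mono) auto
      also have "\<dots> = norm w powr (-a) * sin (a * Im (Ln w))" by simp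
      also have "\<dots> = - Im (inverse (w powr complex_of_real a))" by (rule im_inv_powr[OF w, symmetric])
      finally have "k / y \<le> - Im (inverse (w powr complex_of_real a)) / y"
        using True by (intro divide_right_mono) auto
      then have "ennreal (k * (1 / y)) \<le> ennreal (- Im (inverse (w powr complex_of_real a)) / y)"
        by (intro ennreal_leI) simp
      then show ?thesis using True k0 by (simp add: w_def ennreal_mult[symmetric])
    next
      case False
      then show ?thesis by (auto simp: indicator_def)
    qed
  qed
  moreover have "(\<integral>\<^sup>+ y. ennreal k * (ennreal (1 / y) * indicator {1..1+T} y) \<partial>lborel) = ennreal k * ennreal (ln (1 + T) - ln 1)"
  proof -
    have "(\<integral>\<^sup>+ y. ennreal (1 / y) * indicator {1..1+T} y \<partial>lborel) = ennreal (ln (1 + T) - ln 1)"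
    proof (rule nn_integral_FTC_Icc)
      show "(\<lambda>y::real. 1 / y) \<in> borel_measurable borel" by (rule borel_measurable_divide) auto
      fix y :: real assume "y \<in> {1..1+T}"
      then have y0: "0 < y" by simp
      show "DERIV ln y :> 1 / y" using y0 by (auto intro!: derivative_eq_intros)
      show "0 \<le> 1 / y" using y0 by simp
    qed (use T0 in simp)
    then show ?thesis by (subst nn_integral_cmult) auto
  qed
  moreover have "ennreal k * ennreal (ln (1 + T) - ln 1) = ennreal (c * 2 powr (-a) * (ln (\<bar>t\<bar> + 1) / (1 + \<bar>t\<bar>) powr a))"
  proof -
    have "(2 * (1 + T)) powr (-a) = 2 powr (-a) * (1 + T) powr (-a)" by (rule powr_mult)
    then have "k * (ln (1 + T) - ln 1) = c * 2 powr (-a) * (ln (\<bar>t\<bar> + 1) / (1 + \<bar>t\<bar>) powr a)"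
      unfolding k_def using aT by (simp add: powr_minus_divide add.commute)
    moreover have "0 \<le> ln (1 + T) - ln 1" using T0 by simp
    ultimately show ?thesis using k0 by (simp add: ennreal_mult[symmetric])
  qed
  ultimately show ?thesis unfolding c_def by simp
qed

lemma cz_bound:
  fixes z :: complex assumes z: "0 < Im z"
  shows "1 + \<bar>u\<bar> \<le> (1 + (1 + norm z) / Im z) * norm (z + of_real u)"
proof -
  have h1: "Im z \<le> norm (z + of_real u)" using abs_Im_le_cmod[of "z + of_real u"] z by simp
  have h2: "\<bar>u\<bar> - norm z \<le> norm (z + of_real u)"
    using norm_diff_ineq[of "complex_of_real u" z] by (simp add: add.commute)
  have q: "1 \<le> norm (z + of_real u) / Im z" using h1 z by simp
  have "(1 + norm z) * 1 \<le> (1 + norm z) * (norm (z + of_real u) / Im z)"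
    using q by (intro mult_left_mono) auto
  then have "1 + norm z \<le> (1 + norm z) * (norm (z + of_real u) / Im z)" by simp
  then have "1 + \<bar>u\<bar> \<le> norm (z + of_real u) + (1 + norm z) * (norm (z + of_real u) / Im z)"
    using h2 by linarith
  then show ?thesis by (simp add: algebra_simps)
qed

lemma Gint_fin:
  assumes a: "0 < \<alpha>" "\<alpha> < 1" and nu: "\<nu> \<in> Mplus \<alpha>"
    and L: "(\<integral>\<^sup>+ t. indicator {..0} t * ennreal (ln (\<bar>t\<bar> + 1) / (1 + \<bar>t\<bar>) powr \<alpha>) \<partial>\<nu>) < \<infinity>"
    and p: "p = 1/(1-\<alpha>)"
  shows "(\<integral>\<^sup>+ t. Gf p t \<partial>\<nu>) < \<infinity>"
proof -
  have p1: "1 < p" using a by (simp add: p field_simps)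
  have pe: "1/p - 1 = -\<alpha>" using a by (simp add: p field_simps)
  have sn: "sets \<nu> = sets borel" and fin: "(\<integral>\<^sup>+ t. ennreal ((1 + \<bar>t\<bar>) powr (-\<alpha>)) \<partial>\<nu>) < \<infinity>"
    using nu by (auto simp: Mplus_def)
  have C0: "0 \<le> Cp p" using Kr_pos[OF p1] by (simp add: Cp_def)
  have "(\<integral>\<^sup>+ t. Gf p t \<partial>\<nu>) \<le> (\<integral>\<^sup>+ t. ennreal (Cp p) * (ennreal ((1 + \<bar>t\<bar>) powr (-\<alpha>)) +
          indicator {..0} t * ennreal (ln (\<bar>t\<bar> + 1) / (1 + \<bar>t\<bar>) powr \<alpha>)) \<partial>\<nu>)"
  proof (intro nn_integral_mono)
    fix t :: real
    have "Gf p t \<le> ennreal (Cp p * Bd p t)" by (rule G_bound[OF p1])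
    also have "Bd p t = (1 + \<bar>t\<bar>) powr (-\<alpha>) + indicator {..0} t * (ln (\<bar>t\<bar> + 1) / (1 + \<bar>t\<bar>) powr \<alpha>)"
      unfolding Bd_def pe by (simp add: powr_minus_divide add.commute)
    also have "ennreal (Cp p * ((1 + \<bar>t\<bar>) powr (-\<alpha>) + indicator {..0} t * (ln (\<bar>t\<bar> + 1) / (1 + \<bar>t\<bar>) powr \<alpha>)))
        = ennreal (Cp p) * (ennreal ((1 + \<bar>t\<bar>) powr (-\<alpha>)) + indicator {..0} t * ennreal (ln (\<bar>t\<bar> + 1) / (1 + \<bar>t\<bar>) powr \<alpha>))"
      using C0 by (simp add: ennreal_mult ennreal_plus[symmetric] indicator_def del: ennreal_plus)
    finally show "Gf p t \<le> ennreal (Cp p) * (ennreal ((1 + \<bar>t\<bar>) powr (-\<alpha>)) +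
          indicator {..0} t * ennreal (ln (\<bar>t\<bar> + 1) / (1 + \<bar>t\<bar>) powr \<alpha>))" .
  qed
  also have "\<dots> = ennreal (Cp p) * ((\<integral>\<^sup>+ t. ennreal ((1 + \<bar>t\<bar>) powr (-\<alpha>)) \<partial>\<nu>) +
          (\<integral>\<^sup>+ t. indicator {..0} t * ennreal (ln (\<bar>t\<bar> + 1) / (1 + \<bar>t\<bar>) powr \<alpha>) \<partial>\<nu>))"
    using sn by (simp add: nn_integral_cmult nn_integral_add measurable_cong_sets[OF sn refl])
  also have "\<dots> < \<infinity>" using fin L by (simp add: ennreal_mult_less_top)
  finally show ?thesis .
qed


lemma suff:
  assumes a: "0 < \<alpha>" "\<alpha> < 1" and nu: "\<nu> \<in> Mplus \<alpha>"
    and L: "(\<integral>\<^sup>+ t. indicator {..0} t * ennreal (ln (\<bar>t\<bar> + 1) / (1 + \<bar>t\<bar>) powr \<alpha>) \<partial>\<nu>) < \<infinity>"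
  shows "\<exists>\<mu>. \<mu> \<in> Mplus 1 \<and> (\<forall>z. 0 < Im z \<longrightarrow> Cauchy_tr \<alpha> \<nu> z = Cauchy_tr 1 \<mu> z)"
proof -
  define p where "p = 1/(1-\<alpha>)"
  have p: "1 < p" using a by (simp add: p_def field_simps)
  have pe: "1/p - 1 = -\<alpha>" using a by (simp add: p_def field_simps)
  have sn: "sets \<nu> = sets borel" using nu by (auto simp: Mplus_def)
  have sfn: "sigma_finite_measure \<nu>" by (rule Mplus_sigma_finite[OF nu]) (use a in simp)
  interpret PS: pair_sigma_finite \<nu> lborel
    by (intro pair_sigma_finite.intro sfn sigma_finite_lborel)
  define K where "K = Kr p"
  have K0: "0 < K" using Kr_pos[OF p] by (simp add: K_def)
  define M where "M = \<nu> \<Otimes>\<^sub>M (lborel :: real measure)"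
  define D where "D = density M (\<lambda>w. ennreal (indicator {0..} (snd w) / K))"
  define F where "F = (\<lambda>w::real \<times> real. fst w + snd w powr p)"
  define \<mu> where "\<mu> = distr D borel F"
  have sM: "sets M = sets (borel \<Otimes>\<^sub>M borel)" unfolding M_def by (rule sets_pair_measure_cong[OF sn sets_lborel])
  have measM: "measurable M N = measurable (borel \<Otimes>\<^sub>M borel) N" for N :: "'x measure"
    by (rule measurable_cong_sets[OF sM refl])
  have measF: "F \<in> M \<rightarrow>\<^sub>M borel" unfolding measM F_def by measurable
  have measFD: "F \<in> D \<rightarrow>\<^sub>M borel" unfolding D_def using measF by simp
  have Gfin: "(\<integral>\<^sup>+ t. Gf p t \<partial>\<nu>) < \<infinity>" by (rule Gint_fin[OF a nu L p_def])
  let ?q = "\<lambda>w. ennreal (indicator {0..} (snd w) / K) * ennreal (1 / (1 + \<bar>F w\<bar>))"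
  have Qeq: "(\<integral>\<^sup>+ w. ?q w \<partial>M) = ennreal (1/K) * (\<integral>\<^sup>+ t. Gf p t \<partial>\<nu>)"
  proof -
    have "(\<integral>\<^sup>+ w. ?q w \<partial>M) = (\<integral>\<^sup>+ t. \<integral>\<^sup>+ x. ?q (t, x) \<partial>lborel \<partial>\<nu>)"
      unfolding M_def by (rule lborel.nn_integral_fst[symmetric]) (unfold M_def[symmetric] measM F_def, measurable)
    also have "\<dots> = (\<integral>\<^sup>+ t. ennreal (1/K) * Gf p t \<partial>\<nu>)"
    proof (intro nn_integral_cong)
      fix t :: real
      have "(\<integral>\<^sup>+ x. ?q (t, x) \<partial>lborel) = (\<integral>\<^sup>+ x. ennreal (1/K) * (ennreal (1 / (1 + \<bar>t + x powr p\<bar>)) * indicator {0..} x) \<partial>lborel)"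
        by (intro nn_integral_cong) (simp add: F_def indicator_def ennreal_mult[symmetric] K0)
      also have "\<dots> = ennreal (1/K) * Gf p t" unfolding Gf_def by (rule nn_integral_cmult) measurable
      finally show "(\<integral>\<^sup>+ x. ?q (t, x) \<partial>lborel) = ennreal (1/K) * Gf p t" .
    qed
    also have "\<dots> = ennreal (1/K) * (\<integral>\<^sup>+ t. Gf p t \<partial>\<nu>)"
    proof (rule nn_integral_cmult)
      have "(\<lambda>w. ennreal (1 / (1 + \<bar>fst w + snd w powr p\<bar>)) * indicator {0..} (snd w)) \<in> borel_measurable M"
        unfolding measM by measurable
      then have "(\<lambda>t. \<integral>\<^sup>+ x. ennreal (1 / (1 + \<bar>fst (t, x) + snd (t,x) powr p\<bar>)) * indicator {0..} (snd (t,x)) \<partial>lborel) \<in> borel_measurable \<nu>"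
        unfolding M_def by (rule lborel.borel_measurable_nn_integral_fst)
      then show "Gf p \<in> borel_measurable \<nu>" unfolding Gf_def by simp
    qed
    finally show ?thesis .
  qed
  have Qfin: "(\<integral>\<^sup>+ w. ?q w \<partial>M) < \<infinity>" using Qeq Gfin by (simp add: ennreal_mult_less_top)
  show ?thesis
  proof (intro exI conjI allI impI)
    have "(\<integral>\<^sup>+ u. ennreal ((1 + \<bar>u\<bar>) powr (-1)) \<partial>\<mu>) = (\<integral>\<^sup>+ w. ennreal ((1 + \<bar>F w\<bar>) powr (-1)) \<partial>D)"
      unfolding \<mu>_def by (rule nn_integral_distr[OF measFD]) measurable
    also have "\<dots> = (\<integral>\<^sup>+ w. ennreal (indicator {0..} (snd w) / K) * ennreal ((1 + \<bar>F w\<bar>) powr (-1)) \<partial>M)"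
      unfolding D_def by (rule nn_integral_density) (unfold measM F_def, measurable)
    also have "\<dots> = (\<integral>\<^sup>+ w. ?q w \<partial>M)"
      by (intro nn_integral_cong) (simp add: powr_neg_one)
    finally show "\<mu> \<in> Mplus 1" unfolding Mplus_def using Qfin by (simp add: \<mu>_def)
  next
    fix z :: complex assume z: "0 < Im z"
    define Cz where "Cz = 1 + (1 + norm z) / Im z"
    have Cz0: "0 < Cz" using z by (simp add: Cz_def add_pos_nonneg)
    define g where "g = (\<lambda>u::real. inverse ((z + of_real u) powr complex_of_real 1))"
    have gmeas: "g \<in> borel_measurable borel" unfolding g_def by measurable
    have zu: "z + of_real u \<noteq> 0" for u using z by (auto simp: complex_eq_iff)
    let ?h = "\<lambda>w. (indicator {0..} (snd w) / K) *\<^sub>R g (F w)"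
    have hmeas: "?h \<in> borel_measurable M" unfolding measM g_def F_def by measurable
    have hint: "integrable M ?h"
    proof (rule integrableI_bounded[OF hmeas])
      have "(\<integral>\<^sup>+ w. ennreal (norm (?h w)) \<partial>M) \<le> (\<integral>\<^sup>+ w. ennreal Cz * ?q w \<partial>M)"
      proof (intro nn_integral_mono)
        fix w :: "real \<times> real"
        have b: "1 + \<bar>F w\<bar> \<le> Cz * norm (z + of_real (F w))" unfolding Cz_def by (rule cz_bound[OF z])
        have pos: "0 < 1 + \<bar>F w\<bar>" by simp
        have "norm (g (F w)) = 1 / norm (z + of_real (F w))" by (simp add: g_def norm_inverse divide_inverse)
        also have "\<dots> \<le> Cz * (1 / (1 + \<bar>F w\<bar>))"
          using b pos Cz0 zu[of "F w"] by (simp add: divide_simps mult.commute)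
        finally have ng: "norm (g (F w)) \<le> Cz * (1 / (1 + \<bar>F w\<bar>))" .
        have "norm (?h w) = (indicator {0..} (snd w) / K) * norm (g (F w))"
          using K0 by (simp add: indicator_def)
        also have "\<dots> \<le> (indicator {0..} (snd w) / K) * (Cz * (1 / (1 + \<bar>F w\<bar>)))"
          using ng K0 by (intro mult_left_mono) (auto simp: indicator_def)
        finally have "ennreal (norm (?h w)) \<le> ennreal ((indicator {0..} (snd w) / K) * (Cz * (1 / (1 + \<bar>F w\<bar>))))"
          by (rule ennreal_leI)
        also have "\<dots> = ennreal Cz * ?q w"
          using K0 Cz0 by (simp add: ennreal_mult[symmetric] indicator_def mult.commute mult.left_commute)
        finally show "ennreal (norm (?h w)) \<le> ennreal Cz * ?q w" .
      qed
      also have "\<dots> = ennreal Cz * (\<integral>\<^sup>+ w. ?q w \<partial>M)"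
        by (rule nn_integral_cmult) (unfold measM F_def, measurable)
      also have "\<dots> < \<infinity>" using Qfin by (simp add: ennreal_mult_less_top)
      finally show "(\<integral>\<^sup>+ w. ennreal (norm (?h w)) \<partial>M) < \<infinity>" .
    qed
    have "Cauchy_tr 1 \<mu> z = integral\<^sup>L \<mu> g" unfolding Cauchy_tr_def g_def by simp
    also have "\<dots> = integral\<^sup>L D (\<lambda>w. g (F w))" unfolding \<mu>_def by (rule integral_distr[OF measFD gmeas])
    also have "\<dots> = integral\<^sup>L M ?h"
    proof -
      have m1: "(\<lambda>w. g (F w)) \<in> borel_measurable M" unfolding measM g_def F_def by measurable
      have m2: "(\<lambda>w. indicator {0..} (snd w) / K) \<in> borel_measurable M" unfolding measM by measurable
      have ae: "AE w in M. 0 \<le> indicator {0..} (snd w) / K" using K0 by simp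
      show ?thesis unfolding D_def by (rule integral_density[OF m1 m2 ae])
    qed
    also have "\<dots> = (\<integral> t. \<integral> x. ?h (t, x) \<partial>lborel \<partial>\<nu>)"
      using hint unfolding M_def by (rule PS.integral_fst'[symmetric])
    also have "\<dots> = (\<integral> t. inverse ((z + of_real t) powr complex_of_real \<alpha>) \<partial>\<nu>)"
    proof (intro Bochner_Integration.integral_cong refl)
      fix t :: real
      have wS: "z + of_real t \<notin> \<real>\<^sub>\<le>\<^sub>0"
      proof
        assume "z + of_real t \<in> \<real>\<^sub>\<le>\<^sub>0"
        then obtain r where "z + of_real t = of_real r" by (auto elim!: nonpos_Reals_cases)
        then have "Im (z + of_real t) = Im (of_real r)" by simp
        then show False using z by simp
      qed
      have "(\<integral> x. ?h (t, x) \<partial>lborel) = (\<integral> x. (1/K) *\<^sub>R (indicator {0..} x *\<^sub>R (1 / ((z + of_real t) + complex_of_real (x powr p)))) \<partial>lborel)"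
        by (intro Bochner_Integration.integral_cong refl) (simp add: g_def F_def add.assoc divide_inverse)
      also have "\<dots> = (1/K) *\<^sub>R Hf p (z + of_real t)"
        unfolding Hf_def set_lebesgue_integral_def by (rule integral_scaleR_right)
      also have "\<dots> = (1/K) *\<^sub>R (complex_of_real K * (z + of_real t) powr complex_of_real (1/p - 1))"
        using Hf_eq[OF p wS] by (simp add: K_def Kr_def)
      also have "\<dots> = (z + of_real t) powr complex_of_real (- \<alpha>)"
        using K0 by (simp add: pe scaleR_conv_of_real)
      also have "\<dots> = inverse ((z + of_real t) powr complex_of_real \<alpha>)"
        by (simp add: powr_minus)
      finally show "(\<integral> x. ?h (t, x) \<partial>lborel) = inverse ((z + of_real t) powr complex_of_real \<alpha>)" .
    qed
    also have "\<dots> = Cauchy_tr \<alpha> \<nu> z" unfolding Cauchy_tr_def ..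
    finally show "Cauchy_tr \<alpha> \<nu> z = Cauchy_tr 1 \<mu> z" by simp
  qed
qed

lemma nec:
  assumes a: "0 < \<alpha>" "\<alpha> < 1" and nu: "\<nu> \<in> Mplus \<alpha>" and mu: "\<mu> \<in> Mplus 1"
    and eq: "\<forall>z. 0 < Im z \<longrightarrow> Cauchy_tr \<alpha> \<nu> z = Cauchy_tr 1 \<mu> z"
  shows "(\<integral>\<^sup>+ t. indicator {..0} t * ennreal (ln (\<bar>t\<bar> + 1) / (1 + \<bar>t\<bar>) powr \<alpha>) \<partial>\<nu>) < \<infinity>"
proof -
  have sn: "sets \<nu> = sets borel" and finn: "(\<integral>\<^sup>+ t. ennreal ((1 + \<bar>t\<bar>) powr (-\<alpha>)) \<partial>\<nu>) < \<infinity>"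
    using nu by (auto simp: Mplus_def)
  have sm: "sets \<mu> = sets borel" and finm: "(\<integral>\<^sup>+ t. ennreal ((1 + \<bar>t\<bar>) powr (-1)) \<partial>\<mu>) < \<infinity>"
    using mu by (auto simp: Mplus_def)
  have sfn: "sigma_finite_measure \<nu>" by (rule Mplus_sigma_finite[OF nu]) (use a in simp)
  have sfm: "sigma_finite_measure \<mu>" by (rule Mplus_sigma_finite[OF mu]) simp
  interpret PN: pair_sigma_finite \<nu> lborel by (intro pair_sigma_finite.intro sfn sigma_finite_lborel)
  interpret PM: pair_sigma_finite \<mu> lborel by (intro pair_sigma_finite.intro sfm sigma_finite_lborel)
  have measN: "measurable (\<nu> \<Otimes>\<^sub>M (lborel :: real measure)) N = measurable (borel \<Otimes>\<^sub>M borel) N" for N :: "'x measure"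
    by (rule measurable_cong_sets[OF sets_pair_measure_cong[OF sn sets_lborel] refl])
  have measM: "measurable (\<mu> \<Otimes>\<^sub>M (lborel :: real measure)) N = measurable (borel \<Otimes>\<^sub>M borel) N" for N :: "'x measure"
    by (rule measurable_cong_sets[OF sets_pair_measure_cong[OF sm sets_lborel] refl])
  have measn: "measurable \<nu> N = measurable borel N" for N :: "'x measure"
    by (rule measurable_cong_sets[OF sn refl])
  have measm: "measurable \<mu> N = measurable borel N" for N :: "'x measure"
    by (rule measurable_cong_sets[OF sm refl])
  define c where "c = min (sin (\<alpha> * pi / 2)) (sin ((1 - \<alpha>) * pi)) * 2 powr (-\<alpha>)"
  have c0: "0 < c" unfolding c_def using sin_lb_pos[OF a] by simp
  define gn where "gn = (\<lambda>t y. - Im (inverse ((\<i> * complex_of_real y + complex_of_real t) powr complex_of_real \<alpha>)))"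
  define gm where "gm = (\<lambda>u y. y / (u^2 + y^2) :: real)"
  have side_n: "ennreal (- Im (Cauchy_tr \<alpha> \<nu> (\<i> * complex_of_real y))) = (\<integral>\<^sup>+ t. ennreal (gn t y) \<partial>\<nu>)"
    if y: "1 \<le> y" for y :: real
  proof -
    let ?f = "\<lambda>t. inverse ((\<i> * complex_of_real y + complex_of_real t) powr complex_of_real \<alpha>)"
    have fmeas: "?f \<in> borel_measurable \<nu>" unfolding measn by measurable
    have fint: "integrable \<nu> ?f"
    proof (rule integrableI_bounded[OF fmeas])
      have "(\<integral>\<^sup>+ t. ennreal (norm (?f t)) \<partial>\<nu>) \<le> (\<integral>\<^sup>+ t. ennreal (2 powr \<alpha>) * ennreal ((1 + \<bar>t\<bar>) powr (-\<alpha>)) \<partial>\<nu>)"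
      proof (intro nn_integral_mono)
        fix t :: real
        define w where "w = \<i> * complex_of_real y + complex_of_real t"
        have w0: "0 < norm w" using y by (auto simp: w_def complex_eq_iff)
        have n1: "\<bar>t\<bar> \<le> norm w" using abs_Re_le_cmod[of w] by (simp add: w_def)
        have n2: "1 \<le> norm w" using abs_Im_le_cmod[of w] y by (simp add: w_def)
        have "(1 + \<bar>t\<bar>) / 2 \<le> norm w" using n1 n2 by simp
        then have "((1 + \<bar>t\<bar>) / 2) powr \<alpha> \<le> norm w powr \<alpha>" using a by (intro powr_mono2) auto
        moreover have "0 < ((1 + \<bar>t\<bar>) / 2) powr \<alpha>" by simp
        ultimately have "inverse (norm w powr \<alpha>) \<le> inverse (((1 + \<bar>t\<bar>) / 2) powr \<alpha>)"
          by (intro le_imp_inverse_le) auto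
        also have "\<dots> = 2 powr \<alpha> * (1 + \<bar>t\<bar>) powr (-\<alpha>)"
        proof -
          have "((1 + \<bar>t\<bar>) / 2) powr \<alpha> = (1 + \<bar>t\<bar>) powr \<alpha> / 2 powr \<alpha>" by (rule powr_divide)
          then have "inverse (((1 + \<bar>t\<bar>) / 2) powr \<alpha>) = 2 powr \<alpha> / (1 + \<bar>t\<bar>) powr \<alpha>" by simp
          also have "\<dots> = 2 powr \<alpha> * (1 + \<bar>t\<bar>) powr (-\<alpha>)" by (simp add: powr_minus divide_inverse)
          finally show ?thesis .
        qed
        finally have le: "inverse (norm w powr \<alpha>) \<le> 2 powr \<alpha> * (1 + \<bar>t\<bar>) powr (-\<alpha>)" .
        have "norm (?f t) = inverse (norm w powr \<alpha>)"
          by (simp add: w_def norm_inverse norm_powr_real_powr')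
        then have "ennreal (norm (?f t)) \<le> ennreal (2 powr \<alpha> * (1 + \<bar>t\<bar>) powr (-\<alpha>))"
          using le by (intro ennreal_leI) simp
        then show "ennreal (norm (?f t)) \<le> ennreal (2 powr \<alpha>) * ennreal ((1 + \<bar>t\<bar>) powr (-\<alpha>))"
          by (simp add: ennreal_mult)
      qed
      also have "\<dots> = ennreal (2 powr \<alpha>) * (\<integral>\<^sup>+ t. ennreal ((1 + \<bar>t\<bar>) powr (-\<alpha>)) \<partial>\<nu>)"
        by (rule nn_integral_cmult) (unfold measn, measurable)
      also have "\<dots> < \<infinity>" using finn by (simp add: ennreal_mult_less_top)
      finally show "(\<integral>\<^sup>+ t. ennreal (norm (?f t)) \<partial>\<nu>) < \<infinity>" .
    qed
    have "- Im (Cauchy_tr \<alpha> \<nu> (\<i> * complex_of_real y)) = - Im (integral\<^sup>L \<nu> ?f)"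
      unfolding Cauchy_tr_def by (simp only: add.commute)
    also have "Im (integral\<^sup>L \<nu> ?f) = (\<integral> t. Im (?f t) \<partial>\<nu>)" by (rule integral_Im[OF fint, symmetric])
    also have "- (\<integral> t. Im (?f t) \<partial>\<nu>) = (\<integral> t. gn t y \<partial>\<nu>)"
      unfolding gn_def by (rule Bochner_Integration.integral_minus[symmetric])
    also have "ennreal \<dots> = (\<integral>\<^sup>+ t. ennreal (gn t y) \<partial>\<nu>)"
    proof (rule nn_integral_eq_integral[symmetric])
      show "integrable \<nu> (\<lambda>t. gn t y)" unfolding gn_def using fint by (intro integrable_minus integrable_Im)
      show "AE t in \<nu>. 0 \<le> gn t y" unfolding gn_def using y a by (intro AE_I2 g_nonneg) auto
    qed
    finally show ?thesis .
  qed
  have side_m: "ennreal (- Im (Cauchy_tr 1 \<mu> (\<i> * complex_of_real y))) = (\<integral>\<^sup>+ u. ennreal (gm u y) \<partial>\<mu>)"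
    if y: "1 \<le> y" for y :: real
  proof -
    let ?f = "\<lambda>u. inverse ((\<i> * complex_of_real y + complex_of_real u) powr complex_of_real 1)"
    have fmeas: "?f \<in> borel_measurable \<mu>" unfolding measm by measurable
    have fint: "integrable \<mu> ?f"
    proof (rule integrableI_bounded[OF fmeas])
      have "(\<integral>\<^sup>+ u. ennreal (norm (?f u)) \<partial>\<mu>) \<le> (\<integral>\<^sup>+ u. ennreal 2 * ennreal ((1 + \<bar>u\<bar>) powr (-1)) \<partial>\<mu>)"
      proof (intro nn_integral_mono)
        fix u :: real
        define w where "w = \<i> * complex_of_real y + complex_of_real u"
        have n1: "\<bar>u\<bar> \<le> norm w" using abs_Re_le_cmod[of w] by (simp add: w_def)
        have n2: "1 \<le> norm w" using abs_Im_le_cmod[of w] y by (simp add: w_def)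
        have h: "(1 + \<bar>u\<bar>) / 2 \<le> norm w" using n1 n2 by simp
        have "inverse (norm w) \<le> inverse ((1 + \<bar>u\<bar>) / 2)"
          using h by (intro le_imp_inverse_le) auto
        also have "\<dots> = 2 * (1 + \<bar>u\<bar>) powr (-1)"
        proof -
          have e: "(1 + \<bar>u\<bar>) powr (-1) = 1 / (1 + \<bar>u\<bar>)" by simp
          show ?thesis unfolding e by simp
        qed
        finally have le: "inverse (norm w) \<le> 2 * (1 + \<bar>u\<bar>) powr (-1)" .
        have "norm (?f u) = inverse (norm w)" by (simp add: w_def norm_inverse)
        then have "ennreal (norm (?f u)) \<le> ennreal (2 * (1 + \<bar>u\<bar>) powr (-1))"
          using le by (intro ennreal_leI) simp
        also have "\<dots> = ennreal 2 * ennreal ((1 + \<bar>u\<bar>) powr (-1))" by (rule ennreal_mult) auto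
        finally show "ennreal (norm (?f u)) \<le> ennreal 2 * ennreal ((1 + \<bar>u\<bar>) powr (-1))" .
      qed
      also have "\<dots> = ennreal 2 * (\<integral>\<^sup>+ u. ennreal ((1 + \<bar>u\<bar>) powr (-1)) \<partial>\<mu>)"
        by (rule nn_integral_cmult) (unfold measm, measurable)
      also have "\<dots> < \<infinity>" using finm by (simp add: ennreal_mult_less_top)
      finally show "(\<integral>\<^sup>+ u. ennreal (norm (?f u)) \<partial>\<mu>) < \<infinity>" .
    qed
    have gmf: "gm u y = - Im (?f u)" for u
      using y by (simp add: gm_def power2_eq_square)
    have "- Im (Cauchy_tr 1 \<mu> (\<i> * complex_of_real y)) = - Im (integral\<^sup>L \<mu> ?f)"
      unfolding Cauchy_tr_def by (simp only: add.commute)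
    also have "Im (integral\<^sup>L \<mu> ?f) = (\<integral> u. Im (?f u) \<partial>\<mu>)" by (rule integral_Im[OF fint, symmetric])
    also have "- (\<integral> u. Im (?f u) \<partial>\<mu>) = (\<integral> u. gm u y \<partial>\<mu>)"
      unfolding gmf by (rule Bochner_Integration.integral_minus[symmetric])
    also have "ennreal \<dots> = (\<integral>\<^sup>+ u. ennreal (gm u y) \<partial>\<mu>)"
    proof (rule nn_integral_eq_integral[symmetric])
      show "integrable \<mu> (\<lambda>u. gm u y)" unfolding gmf using fint by (intro integrable_minus integrable_Im)
      show "AE u in \<mu>. 0 \<le> gm u y" unfolding gm_def using y by (intro AE_I2) simp
    qed
    finally show ?thesis .
  qed
  have gn0: "0 \<le> gn t y" if "0 < y" for t y :: real
    unfolding gn_def using that a by (intro g_nonneg) auto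
  have gm0: "0 \<le> gm u y" if "0 < y" for u y :: real
    unfolding gm_def using that by (simp add: add_nonneg_pos)
  have mid: "(\<integral>\<^sup>+ y. \<integral>\<^sup>+ u. ennreal (gm u y / y) * indicator {1..} y \<partial>\<mu> \<partial>lborel)
      = (\<integral>\<^sup>+ y. \<integral>\<^sup>+ t. ennreal (gn t y / y) * indicator {1..} y \<partial>\<nu> \<partial>lborel)"
  proof (intro nn_integral_cong)
    fix y :: real
    show "(\<integral>\<^sup>+ u. ennreal (gm u y / y) * indicator {1..} y \<partial>\<mu>) = (\<integral>\<^sup>+ t. ennreal (gn t y / y) * indicator {1..} y \<partial>\<nu>)"
    proof (cases "1 \<le> y")
      case True
      have y0: "0 < y" using True by simp
      have "(\<integral>\<^sup>+ u. ennreal (gm u y / y) * indicator {1..} y \<partial>\<mu>) = (\<integral>\<^sup>+ u. ennreal (1/y) * ennreal (gm u y) \<partial>\<mu>)"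
        using True y0 gm0[OF y0] by (intro nn_integral_cong) (simp add: ennreal_mult[symmetric] divide_inverse mult.commute)
      also have "\<dots> = ennreal (1/y) * (\<integral>\<^sup>+ u. ennreal (gm u y) \<partial>\<mu>)"
        by (rule nn_integral_cmult) (unfold measm gm_def, measurable)
      also have "(\<integral>\<^sup>+ u. ennreal (gm u y) \<partial>\<mu>) = (\<integral>\<^sup>+ t. ennreal (gn t y) \<partial>\<nu>)"
      proof -
        have "Cauchy_tr \<alpha> \<nu> (\<i> * complex_of_real y) = Cauchy_tr 1 \<mu> (\<i> * complex_of_real y)"
          using eq y0 by simp
        then show ?thesis using side_n[OF True] side_m[OF True] by simp
      qed
      also have "ennreal (1/y) * (\<integral>\<^sup>+ t. ennreal (gn t y) \<partial>\<nu>) = (\<integral>\<^sup>+ t. ennreal (1/y) * ennreal (gn t y) \<partial>\<nu>)"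
        by (rule nn_integral_cmult[symmetric]) (unfold measn gn_def, measurable)
      also have "\<dots> = (\<integral>\<^sup>+ t. ennreal (gn t y / y) * indicator {1..} y \<partial>\<nu>)"
        using True y0 gn0[OF y0] by (intro nn_integral_cong) (simp add: ennreal_mult[symmetric] divide_inverse mult.commute)
      finally show ?thesis .
    qed simp
  qed
  have A: "(\<integral>\<^sup>+ y. \<integral>\<^sup>+ u. ennreal (gm u y / y) * indicator {1..} y \<partial>\<mu> \<partial>lborel)
      = (\<integral>\<^sup>+ u. \<integral>\<^sup>+ y. ennreal (gm u y / y) * indicator {1..} y \<partial>lborel \<partial>\<mu>)"
    by (rule PM.Fubini') (unfold measM gm_def, measurable)
  have A2: "(\<integral>\<^sup>+ u. \<integral>\<^sup>+ y. ennreal (gm u y / y) * indicator {1..} y \<partial>lborel \<partial>\<mu>)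
      \<le> (\<integral>\<^sup>+ u. ennreal 2 * ennreal ((1 + \<bar>u\<bar>) powr (-1)) \<partial>\<mu>)"
  proof (intro nn_integral_mono)
    fix u :: real
    have "(\<integral>\<^sup>+ y. ennreal (gm u y / y) * indicator {1..} y \<partial>lborel) = (\<integral>\<^sup>+ y. ennreal (1 / (u^2 + y^2)) * indicator {1..} y \<partial>lborel)"
      by (intro nn_integral_cong) (simp add: gm_def indicator_def)
    also have "\<dots> \<le> ennreal (2 / (1 + \<bar>u\<bar>))" by (rule N5)
    also have "\<dots> = ennreal (2 * (1 + \<bar>u\<bar>) powr (-1))" by simp
    also have "\<dots> = ennreal 2 * ennreal ((1 + \<bar>u\<bar>) powr (-1))" by (rule ennreal_mult) auto
    finally show "(\<integral>\<^sup>+ y. ennreal (gm u y / y) * indicator {1..} y \<partial>lborel) \<le> ennreal 2 * ennreal ((1 + \<bar>u\<bar>) powr (-1))" .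
  qed
  have A3: "(\<integral>\<^sup>+ u. ennreal 2 * ennreal ((1 + \<bar>u\<bar>) powr (-1)) \<partial>\<mu>) < \<infinity>"
  proof -
    have "(\<integral>\<^sup>+ u. ennreal 2 * ennreal ((1 + \<bar>u\<bar>) powr (-1)) \<partial>\<mu>) = ennreal 2 * (\<integral>\<^sup>+ u. ennreal ((1 + \<bar>u\<bar>) powr (-1)) \<partial>\<mu>)"
      by (rule nn_integral_cmult) (unfold measm, measurable)
    then show ?thesis using finm by (simp add: ennreal_mult_less_top)
  qed
  have B: "(\<integral>\<^sup>+ y. \<integral>\<^sup>+ t. ennreal (gn t y / y) * indicator {1..} y \<partial>\<nu> \<partial>lborel)
      = (\<integral>\<^sup>+ t. \<integral>\<^sup>+ y. ennreal (gn t y / y) * indicator {1..} y \<partial>lborel \<partial>\<nu>)"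
    by (rule PN.Fubini') (unfold measN gn_def, measurable)
  have B2: "(\<integral>\<^sup>+ t. ennreal c * (indicator {..0} t * ennreal (ln (\<bar>t\<bar> + 1) / (1 + \<bar>t\<bar>) powr \<alpha>)) \<partial>\<nu>)
      \<le> (\<integral>\<^sup>+ t. \<integral>\<^sup>+ y. ennreal (gn t y / y) * indicator {1..} y \<partial>lborel \<partial>\<nu>)"
  proof (intro nn_integral_mono)
    fix t :: real
    show "ennreal c * (indicator {..0} t * ennreal (ln (\<bar>t\<bar> + 1) / (1 + \<bar>t\<bar>) powr \<alpha>))
        \<le> (\<integral>\<^sup>+ y. ennreal (gn t y / y) * indicator {1..} y \<partial>lborel)"
    proof (cases "t \<le> 0")
      case True
      have "ennreal c * (indicator {..0} t * ennreal (ln (\<bar>t\<bar> + 1) / (1 + \<bar>t\<bar>) powr \<alpha>))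
          = ennreal (min (sin (\<alpha> * pi / 2)) (sin ((1 - \<alpha>) * pi)) * 2 powr (-\<alpha>) * (ln (\<bar>t\<bar> + 1) / (1 + \<bar>t\<bar>) powr \<alpha>))"
        using True c0 by (simp add: c_def ennreal_mult[symmetric])
      also have "\<dots> \<le> (\<integral>\<^sup>+ y. ennreal (gn t y / y) * indicator {1..} y \<partial>lborel)"
        unfolding gn_def by (rule N6[OF a True])
      finally show ?thesis .
    qed simp
  qed
  have "ennreal c * (\<integral>\<^sup>+ t. indicator {..0} t * ennreal (ln (\<bar>t\<bar> + 1) / (1 + \<bar>t\<bar>) powr \<alpha>) \<partial>\<nu>)
      = (\<integral>\<^sup>+ t. ennreal c * (indicator {..0} t * ennreal (ln (\<bar>t\<bar> + 1) / (1 + \<bar>t\<bar>) powr \<alpha>)) \<partial>\<nu>)"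
    by (rule nn_integral_cmult[symmetric]) (unfold measn, measurable)
  also have "\<dots> \<le> (\<integral>\<^sup>+ t. \<integral>\<^sup>+ y. ennreal (gn t y / y) * indicator {1..} y \<partial>lborel \<partial>\<nu>)" by (rule B2)
  also have "\<dots> = (\<integral>\<^sup>+ u. \<integral>\<^sup>+ y. ennreal (gm u y / y) * indicator {1..} y \<partial>lborel \<partial>\<mu>)"
    using mid A B by simp
  also have "\<dots> < \<infinity>" using A2 A3 by (rule le_less_trans)
  finally have "ennreal c * (\<integral>\<^sup>+ t. indicator {..0} t * ennreal (ln (\<bar>t\<bar> + 1) / (1 + \<bar>t\<bar>) powr \<alpha>) \<partial>\<nu>) < \<infinity>" .
  then show ?thesis using c0 by (auto simp: ennreal_mult_less_top)
qed

theorem theorem7p18: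
  fixes \<alpha> :: real and \<nu> :: "real measure"
  assumes "0 < \<alpha>" and "\<alpha> < 1" and "\<nu> \<in> Mplus \<alpha>"
  shows "(\<exists>\<mu>. \<mu> \<in> Mplus 1 \<and>
            (\<forall>z. 0 < Im z \<longrightarrow> Cauchy_tr \<alpha> \<nu> z = Cauchy_tr 1 \<mu> z))
         \<longleftrightarrow>
         (\<integral>\<^sup>+ t. indicator {..0} t * ennreal (ln (\<bar>t\<bar> + 1) / (1 + \<bar>t\<bar>) powr \<alpha>) \<partial>\<nu>) < \<infinity>"
proof
  assume "\<exists>\<mu>. \<mu> \<in> Mplus 1 \<and> (\<forall>z. 0 < Im z \<longrightarrow> Cauchy_tr \<alpha> \<nu> z = Cauchy_tr 1 \<mu> z)"
  then obtain \<mu> where mu: "\<mu> \<in> Mplus 1" and eq: "\<forall>z. 0 < Im z \<longrightarrow> Cauchy_tr \<alpha> \<nu> z = Cauchy_tr 1 \<mu> z"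
    by blast
  show "(\<integral>\<^sup>+ t. indicator {..0} t * ennreal (ln (\<bar>t\<bar> + 1) / (1 + \<bar>t\<bar>) powr \<alpha>) \<partial>\<nu>) < \<infinity>"
    by (rule nec[OF assms mu eq])
next
  assume L: "(\<integral>\<^sup>+ t. indicator {..0} t * ennreal (ln (\<bar>t\<bar> + 1) / (1 + \<bar>t\<bar>) powr \<alpha>) \<partial>\<nu>) < \<infinity>"
  show "\<exists>\<mu>. \<mu> \<in> Mplus 1 \<and> (\<forall>z. 0 < Im z \<longrightarrow> Cauchy_tr \<alpha> \<nu> z = Cauchy_tr 1 \<mu> z)"
    by (rule suff[OF assms L])
qed

end
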